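(* Let $d\geq 1$ and let $\mathcal Z=G(d,2d)$ be the Grassmannian of $d$-dimensional subspaces of $\mathbb C^{2d}$. Let $U,V,W\in\mathcal Z$ be three points that are pairwise in general position, i.e. $U\cap V=U\cap W=V\cap W=0$ as subspaces of $\mathbb C^{2d}$. Then there is a unique morphism $f\colon\mathbb P^1\to\mathcal Z$ of degree $d$ such that $f(0)=U$, $f(1)=V$ and $f(\infty)=W$.
   Context: The degree of a morphism $f\colon\mathbb P^1\to G(k,n)$ is $\int f_*[\mathbb P^1]\cdot\sigma_1$, where $\sigma_1$ is the class of the Schubert divisor; equivalently it is the degree of the pullback of the tautological quotient bundle (minus the degree of the pullback of the tautological subbundle). Points of $\mathbb P^1$ are written in homogeneous coordinates $(s:t)$, with $0=(1:0)$, $1=(1:1)$, $\infty=(0:1)$. *)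

theory Defs
  imports Complex_Main "HOL-Combinatorics.Permutations"
begin

text \<open>Vectors of C^n are modelled as functions nat => complex vanishing at indices >= n.
  A point of G(d,n) is the column span of an n x d matrix of rank d (a frame).\<close>

type_synonym cvec = "nat \<Rightarrow> complex"
type_synonym cmat = "nat \<Rightarrow> nat \<Rightarrow> complex"

definition detn :: "nat \<Rightarrow> cmat \<Rightarrow> complex" where
  "detn d M = (\<Sum>p | p permutes {..<d}. of_int (sign p) * (\<Prod>k<d. M k (p k)))"

definition dsubsets :: "nat \<Rightarrow> nat \<Rightarrow> nat set set" where
  "dsubsets n d = {I. I \<subseteq> {..<n} \<and> card I = d}"

definition minor :: "nat \<Rightarrow> cmat \<Rightarrow> nat set \<Rightarrow> complex" where
  "minor d A I = detn d (\<lambda>k j. A (sorted_list_of_set I ! k) j)"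

definition colspan :: "nat \<Rightarrow> cmat \<Rightarrow> cvec set" where
  "colspan d A = {v. \<exists>c :: nat \<Rightarrow> complex. \<forall>i. v i = (\<Sum>j<d. A i j * c j)}"

definition frame :: "nat \<Rightarrow> nat \<Rightarrow> cmat \<Rightarrow> bool" where
  "frame n d A \<longleftrightarrow> (\<forall>i j. (n \<le> i \<or> d \<le> j) \<longrightarrow> A i j = 0)
                   \<and> (\<exists>I\<in>dsubsets n d. minor d A I \<noteq> 0)"

definition grass_point :: "nat \<Rightarrow> nat \<Rightarrow> cvec set \<Rightarrow> bool" where
  "grass_point n d S \<longleftrightarrow> (\<exists>A. frame n d A \<and> S = colspan d A)"

definition hform :: "nat \<Rightarrow> (nat \<Rightarrow> complex) \<Rightarrow> complex \<Rightarrow> complex \<Rightarrow> complex" where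
  "hform e c s t = (\<Sum>i\<le>e. c i * s ^ i * t ^ (e - i))"

text \<open>f : P^1 -> G(d,n) (points of P^1 given by homogeneous coordinates (s,t) \<noteq> (0,0))
  is a morphism of degree e: its composite with the Pluecker embedding is given by
  binary forms of degree e without common zero.\<close>
definition grass_morphism :: "nat \<Rightarrow> nat \<Rightarrow> nat \<Rightarrow> (complex \<times> complex \<Rightarrow> cvec set) \<Rightarrow> bool" where
  "grass_morphism n d e f \<longleftrightarrow>
     (\<exists>P :: nat set \<Rightarrow> nat \<Rightarrow> complex.
        \<forall>s t. (s, t) \<noteq> (0, 0) \<longrightarrow>
          (\<exists>I\<in>dsubsets n d. hform e (P I) s t \<noteq> 0) \<and>
          (\<exists>A. frame n d A \<and> f (s, t) = colspan d A \<and>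
             (\<exists>c. c \<noteq> 0 \<and> (\<forall>I\<in>dsubsets n d. minor d A I = c * hform e (P I) s t))))"

end

theory Submission
  imports Defs "Jordan_Normal_Form.Determinant"
begin

definition toM :: "nat \<Rightarrow> nat \<Rightarrow> cmat \<Rightarrow> complex mat" where
  "toM r c A = mat r c (\<lambda>(i,j). A i j)"

lemma toM_carrier[simp]: "toM r c A \<in> carrier_mat r c" by (simp add: toM_def)
lemma toM_index[simp]: "i < r \<Longrightarrow> j < c \<Longrightarrow> toM r c A $$ (i,j) = A i j" by (simp add: toM_def)
lemma toM_dim[simp]: "dim_row (toM r c A) = r" "dim_col (toM r c A) = c" by (auto simp: toM_def)

lemma detn_det: "detn d M = det (toM d d M)"
  unfolding detn_def det_def toM_def
  by (auto simp: atLeast0LessThan intro!: sum.cong prod.cong)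

definition submat :: "nat \<Rightarrow> cmat \<Rightarrow> nat set \<Rightarrow> complex mat" where
  "submat d A I = mat d d (\<lambda>(k,j). A (sorted_list_of_set I ! k) j)"

lemma submat_carrier[simp]: "submat d A I \<in> carrier_mat d d" by (simp add: submat_def)

lemma minor_det: "minor d A I = det (submat d A I)"
  unfolding minor_def detn_det submat_def toM_def by simp

lemma rows_minor:
  fixes A :: cmat
  assumes f: "f ` {0..<d} \<subseteq> {0..<n}" and dn: "d \<le> n"
  shows "\<exists>I\<in>dsubsets n d. \<exists>e. \<forall>A. det (mat\<^sub>r d d (\<lambda>i. row (toM n d A) (f i))) = e * minor d A I"
proof (cases "inj_on f {0..<d}")
  case True
  define I where "I = f ` {0..<d}"
  define xs where "xs = sorted_list_of_set I"
  have cI: "card I = d" using True card_image unfolding I_def by fastforce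
  have Isub: "I \<subseteq> {..<n}" using f unfolding I_def by auto
  have fin: "finite I" unfolding I_def by auto
  have lxs: "length xs = d" using cI fin by (simp add: xs_def)
  have sxs: "set xs = I" using fin by (simp add: xs_def)
  have dxs: "distinct xs" by (simp add: xs_def)
  have bn: "bij_betw ((!) xs) {0..<d} I"
    by (rule bij_betw_nth[OF dxs]) (use lxs sxs in auto)
  have bf: "bij_betw f {0..<d} I" using True unfolding I_def by (simp add: bij_betw_def)
  define p where "p = (\<lambda>i. if i < d then inv_into {0..<d} ((!) xs) (f i) else i)"
  have bp: "bij_betw p {0..<d} {0..<d}"
  proof -
    have "bij_betw (inv_into {0..<d} ((!) xs) \<circ> f) {0..<d} {0..<d}"
      using bij_betw_trans[OF bf bij_betw_inv_into[OF bn]] by simp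
    moreover have "\<forall>i\<in>{0..<d}. p i = (inv_into {0..<d} ((!) xs) \<circ> f) i" by (auto simp: p_def)
    ultimately show ?thesis using bij_betw_cong[of "{0..<d}" p "inv_into {0..<d} ((!) xs) \<circ> f" "{0..<d}"] by simp
  qed
  have pp: "p permutes {0..<d}"
    by (rule bij_imp_permutes[OF bp]) (simp add: p_def)
  have xp: "xs ! (p i) = f i" if "i < d" for i
  proof -
    have "f i \<in> I" using that unfolding I_def by auto
    then show ?thesis using that bn by (simp add: p_def f_inv_into_f bij_betw_def)
  qed
  have "I \<in> dsubsets n d" using Isub cI by (simp add: dsubsets_def)
  moreover have "\<forall>A. det (mat\<^sub>r d d (\<lambda>i. row (toM n d A) (f i))) = signof p * minor d A I"
  proof
    fix A
    have "mat\<^sub>r d d (\<lambda>i. row (toM n d A) (f i)) = mat d d (\<lambda>(i,j). submat d A I $$ (p i, j))"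
    proof (rule eq_matI)
      fix i j assume ij: "i < dim_row (mat d d (\<lambda>(i,j). submat d A I $$ (p i, j)))" "j < dim_col (mat d d (\<lambda>(i,j). submat d A I $$ (p i, j)))"
      have "p i < d" using pp ij by (simp add: permutes_in_image)
      moreover have "f i < n" using f ij by (auto simp: image_subset_iff)
      ultimately show "mat\<^sub>r d d (\<lambda>i. row (toM n d A) (f i)) $$ (i, j) = mat d d (\<lambda>(i,j). submat d A I $$ (p i, j)) $$ (i, j)"
        using ij xp[of i] by (simp add: submat_def xs_def[symmetric])
    qed auto
    then show "det (mat\<^sub>r d d (\<lambda>i. row (toM n d A) (f i))) = signof p * minor d A I"
      using det_permute_rows[OF _ pp, of "submat d A I"] by (simp add: minor_det submat_def[symmetric])
  qed
  ultimately show ?thesis by blast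
next
  case False
  then obtain i j where ij: "i < d" "j < d" "i \<noteq> j" "f i = f j" unfolding inj_on_def by auto
  have "{0..<d} \<in> dsubsets n d" using dn by (auto simp: dsubsets_def)
  moreover have "\<forall>A. det (mat\<^sub>r d d (\<lambda>i. row (toM n d A) (f i))) = 0 * minor d A {0..<d}"
  proof
    fix A
    show "det (mat\<^sub>r d d (\<lambda>i. row (toM n d A) (f i))) = 0 * minor d A {0..<d}"
    proof -
      let ?M = "mat\<^sub>r d d (\<lambda>i. row (toM n d A) (f i))"
      have "row ?M i = row ?M j" by (rule eq_vecI) (use ij in \<open>auto simp: mat_of_rows_def\<close>)
      moreover have c: "?M \<in> carrier_mat d d" by (rule mat_row_carrierI)
      ultimately have "det ?M = 0" using det_identical_rows[OF c ij(3) ij(1) ij(2)] by blast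
      then show ?thesis by simp
    qed
  qed
  ultimately show ?thesis by blast
qed


lemma finite_dsubsets[simp]: "finite (dsubsets n d)"
  unfolding dsubsets_def by (rule finite_subset[of _ "Pow {..<n}"]) auto

lemma cb_expand:
  assumes L: "L \<in> carrier_mat d n"
  shows "det (L * toM n d A) = (\<Sum>f\<in>{f. (\<forall>i\<in>{0..<d}. f i \<in> {0..<n}) \<and> (\<forall>i. i \<notin> {0..<d} \<longrightarrow> f i = i)}.
      (\<Prod>i\<in>{0..<d}. L $$ (i, f i)) * det (mat\<^sub>r d d (\<lambda>i. row (toM n d A) (f i))))"
proof -
  let ?B = "toM n d A"
  have "det (L * ?B) = det (mat\<^sub>r d d (\<lambda>i. finsum_vec TYPE(complex) d (\<lambda>k. L $$ (i,k) \<cdot>\<^sub>v row ?B k) {0..<n}))"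
    using mat_mul_finsum_alt[OF L toM_carrier] by simp
  also have "\<dots> = (\<Sum>f\<in>{f. (\<forall>i\<in>{0..<d}. f i \<in> {0..<n}) \<and> (\<forall>i. i \<notin> {0..<d} \<longrightarrow> f i = i)}.
      det (mat\<^sub>r d d (\<lambda>i. L $$ (i, f i) \<cdot>\<^sub>v row ?B (f i))))"
    by (rule det_linear_rows_sum) auto
  also have "\<dots> = (\<Sum>f\<in>{f. (\<forall>i\<in>{0..<d}. f i \<in> {0..<n}) \<and> (\<forall>i. i \<notin> {0..<d} \<longrightarrow> f i = i)}.
      (\<Prod>i\<in>{0..<d}. L $$ (i, f i)) * det (mat\<^sub>r d d (\<lambda>i. row ?B (f i))))"
    by (rule sum.cong[OF refl], rule det_rows_mul) auto
  finally show ?thesis .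
qed

lemma cauchy_binet_ex:
  assumes L: "L \<in> carrier_mat d n" and dn: "d \<le> n"
  shows "\<exists>lam. \<forall>A. det (L * toM n d A) = (\<Sum>I\<in>dsubsets n d. lam I * minor d A I)"
proof -
  define F where "F = {f. (\<forall>i\<in>{0..<d}. f i \<in> {0..<n}) \<and> (\<forall>i. i \<notin> {0..<d} \<longrightarrow> f i = i)}"
  have fF: "finite F" unfolding F_def by (rule finite_bounded_functions) auto
  have "\<forall>f\<in>F. \<exists>I\<in>dsubsets n d. \<exists>e. \<forall>A. det (mat\<^sub>r d d (\<lambda>i. row (toM n d A) (f i))) = e * minor d A I"
    using rows_minor[OF _ dn] unfolding F_def by (auto simp: image_subset_iff)
  then obtain Ig eg where IE: "\<And>f. f \<in> F \<Longrightarrow> Ig f \<in> dsubsets n d"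
    "\<And>f A. f \<in> F \<Longrightarrow> det (mat\<^sub>r d d (\<lambda>i. row (toM n d A) (f i))) = eg f * minor d A (Ig f)"
    by metis
  define cf where "cf f = (\<Prod>i\<in>{0..<d}. L $$ (i, f i)) * eg f" for f
  define lam where "lam I = (\<Sum>f\<in>{f. f \<in> F \<and> Ig f = I}. cf f)" for I
  have "det (L * toM n d A) = (\<Sum>I\<in>dsubsets n d. lam I * minor d A I)" for A
  proof -
    have "det (L * toM n d A) = (\<Sum>f\<in>F. cf f * minor d A (Ig f))"
      unfolding cb_expand[OF L] F_def[symmetric] cf_def
      by (rule sum.cong[OF refl]) (simp add: IE(2))
    also have "\<dots> = (\<Sum>I\<in>dsubsets n d. \<Sum>f\<in>{f. f \<in> F \<and> Ig f = I}. cf f * minor d A (Ig f))"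
      by (rule sum.group[symmetric]) (use fF IE(1) in auto)
    also have "\<dots> = (\<Sum>I\<in>dsubsets n d. lam I * minor d A I)"
      unfolding lam_def sum_distrib_right by (rule sum.cong[OF refl], rule sum.cong) auto
    finally show ?thesis .
  qed
  then show ?thesis by blast
qed

definition ishf :: "nat \<Rightarrow> (complex \<Rightarrow> complex \<Rightarrow> complex) \<Rightarrow> bool" where
  "ishf e F \<longleftrightarrow> (\<exists>c. \<forall>s t. F s t = hform e c s t)"

lemma hform_lin: "hform e (\<lambda>i. \<Sum>x\<in>S. w x * c x i) s t = (\<Sum>x\<in>S. w x * hform e (c x) s t)"
  unfolding hform_def sum_distrib_left sum_distrib_right
  by (subst sum.swap) (simp add: mult.assoc)

lemma ishf_sum:
  assumes "finite S" "\<forall>x\<in>S. ishf e (F x)"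
  shows "ishf e (\<lambda>s t. \<Sum>x\<in>S. w x * F x s t)"
proof -
  from assms(2) obtain c where c: "\<And>x s t. x \<in> S \<Longrightarrow> F x s t = hform e (c x) s t"
    unfolding ishf_def by metis
  have "\<forall>s t. (\<Sum>x\<in>S. w x * F x s t) = hform e (\<lambda>i. \<Sum>x\<in>S. w x * c x i) s t"
    unfolding hform_lin by (auto intro!: sum.cong simp: c)
  then show ?thesis unfolding ishf_def by blast
qed

lemma ishf_mul_lin:
  assumes "ishf m F"
  shows "ishf (Suc m) (\<lambda>s t. F s t * (s * a + t * b))"
proof -
  from assms obtain c where c: "\<And>s t. F s t = hform m c s t" unfolding ishf_def by blast
  define c' where "c' j = (if j = 0 then 0 else a * c (j - 1)) + (if j \<le> m then b * c j else 0)" for j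
  have "F s t * (s * a + t * b) = hform (Suc m) c' s t" for s t
  proof -
    have A: "(\<Sum>j\<le>Suc m. (if j = 0 then 0 else a * c (j - 1)) * s ^ j * t ^ (Suc m - j))
        = (\<Sum>i\<le>m. a * c i * s ^ Suc i * t ^ (m - i))"
      by (subst sum.atMost_Suc_shift) simp
    have B: "(\<Sum>j\<le>Suc m. (if j \<le> m then b * c j else 0) * s ^ j * t ^ (Suc m - j))
        = (\<Sum>i\<le>m. b * c i * s ^ i * t ^ (Suc m - i))"
      by (subst sum.atMost_Suc) simp
    have C: "(\<Sum>i\<le>m. b * c i * s ^ i * t ^ (Suc m - i)) = (\<Sum>i\<le>m. c i * s ^ i * t ^ (m - i) * (t * b))"
      by (rule sum.cong[OF refl]) (simp add: Suc_diff_le mult_ac)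
    have D: "(\<Sum>i\<le>m. a * c i * s ^ Suc i * t ^ (m - i)) = (\<Sum>i\<le>m. c i * s ^ i * t ^ (m - i) * (s * a))"
      by (rule sum.cong[OF refl]) (simp add: mult_ac)
    have "hform (Suc m) c' s t = (\<Sum>j\<le>Suc m. (if j = 0 then 0 else a * c (j - 1)) * s ^ j * t ^ (Suc m - j))
        + (\<Sum>j\<le>Suc m. (if j \<le> m then b * c j else 0) * s ^ j * t ^ (Suc m - j))"
      unfolding hform_def c'_def by (simp add: distrib_right sum.distrib)
    also have "\<dots> = F s t * (s * a + t * b)"
      unfolding A B C D c hform_def by (simp add: distrib_left sum_distrib_right sum.distrib)
    finally show ?thesis by simp
  qed
  then show ?thesis unfolding ishf_def by blast
qed

lemma ishf_prod: "ishf m (\<lambda>s t. \<Prod>k<m. (s * a k + t * b k))"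
proof (induction m)
  case 0
  have "\<forall>s t. (\<Prod>k<0. s * a k + t * b k) = hform 0 (\<lambda>_. 1) s t" by (simp add: hform_def)
  then show ?case unfolding ishf_def by blast
next
  case (Suc m)
  show ?case using ishf_mul_lin[OF Suc, of "a m" "b m"] by (simp add: mult_ac)
qed

lemma minor_affine_ishf:
  "ishf d (\<lambda>s t. minor d (\<lambda>i j. s * M1 i j + t * M2 i j) I)"
proof -
  let ?xs = "sorted_list_of_set I"
  have "ishf d (\<lambda>s t. \<Sum>p\<in>{p. p permutes {..<d}}. of_int (sign p) *
      (\<Prod>k<d. (s * M1 (?xs ! k) (p k) + t * M2 (?xs ! k) (p k))))"
    by (rule ishf_sum) (auto simp: finite_permutations ishf_prod)
  then show ?thesis unfolding minor_def detn_def by simp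
qed

lemma hform_homog:
  assumes "s \<noteq> 0"
  shows "hform e c s t = s ^ e * hform e c 1 (t / s)"
  unfolding hform_def sum_distrib_left
proof (rule sum.cong[OF refl])
  fix i assume "i \<in> {..e}"
  then have "s ^ e = s ^ i * s ^ (e - i)" by (simp add: power_add[symmetric])
  then show "c i * s ^ i * t ^ (e - i) = s ^ e * (c i * 1 ^ i * (t / s) ^ (e - i))"
    using assms by (simp add: power_divide field_simps)
qed

lemma hform_0t: "hform e c 0 t = c 0 * t ^ e"
proof -
  have "hform e c 0 t = (\<Sum>i\<le>e. if i = 0 then c 0 * t ^ e else 0)"
    unfolding hform_def by (rule sum.cong) (auto simp: power_0_left)
  then show ?thesis by simp
qed

lemma hform_10: "hform e c 1 0 = c e"
proof -
  have "hform e c 1 0 = (\<Sum>i\<le>e. if i = e then c e else 0)"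
    unfolding hform_def by (rule sum.cong) (auto simp: power_0_left)
  then show ?thesis by simp
qed

definition hp :: "nat \<Rightarrow> (nat \<Rightarrow> complex) \<Rightarrow> complex poly" where
  "hp e c = (\<Sum>i\<le>e. monom (c i) (e - i))"

lemma poly_hp: "poly (hp e c) z = hform e c 1 z"
  unfolding hp_def hform_def by (simp add: poly_sum poly_monom)

lemma degree_hp: "degree (hp e c) \<le> e"
  unfolding hp_def
  by (rule degree_sum_le) (auto intro: order.trans[OF degree_monom_le])

lemma coeff_hp_top: "coeff (hp e c) e = c 0"
proof -
  have "coeff (hp e c) e = (\<Sum>i\<le>e. if i = 0 then c 0 else 0)"
    unfolding hp_def coeff_sum coeff_monom by (rule sum.cong) auto
  then show ?thesis by simp
qed

lemma coeff_hp_top': "coeff (hp e c) e = hform e c 0 1"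
  by (simp add: coeff_hp_top hform_0t)

lemma smult_smult_mat': "a \<cdot>\<^sub>m (b \<cdot>\<^sub>m (A :: 'a :: comm_ring_1 mat)) = (a * b) \<cdot>\<^sub>m A"
  by (rule eq_matI) auto


definition Lsel :: "nat \<Rightarrow> nat \<Rightarrow> (nat \<Rightarrow> nat) \<Rightarrow> complex mat" where
  "Lsel d n \<sigma> = mat d n (\<lambda>(i,k). if k = \<sigma> i then 1 else 0)"

lemma Lsel_carrier[simp]: "Lsel d n \<sigma> \<in> carrier_mat d n" by (simp add: Lsel_def)

lemma sel_mult:
  assumes K: "K \<in> carrier_mat n m" and s: "\<And>i. i < d \<Longrightarrow> \<sigma> i < n"
  shows "Lsel d n \<sigma> * K = mat d m (\<lambda>(i,j). K $$ (\<sigma> i, j))"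
proof (rule eq_matI)
  fix i j assume ij: "i < dim_row (mat d m (\<lambda>(i,j). K $$ (\<sigma> i, j)))" "j < dim_col (mat d m (\<lambda>(i,j). K $$ (\<sigma> i, j)))"
  then have "(Lsel d n \<sigma> * K) $$ (i,j) = (\<Sum>k<n. (if k = \<sigma> i then 1 else 0) * K $$ (k, j))"
    using K by (auto simp: Lsel_def scalar_prod_def atLeast0LessThan intro!: sum.cong)
  also have "\<dots> = (\<Sum>k<n. if k = \<sigma> i then K $$ (k, j) else 0)" by (rule sum.cong) auto
  also have "\<dots> = K $$ (\<sigma> i, j)" using s[of i] ij by simp
  finally show "(Lsel d n \<sigma> * K) $$ (i,j) = mat d m (\<lambda>(i,j). K $$ (\<sigma> i, j)) $$ (i,j)" using ij by simp
qed (use K in \<open>auto simp: Lsel_def\<close>)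

lemma smult_cancel_mat:
  fixes A B :: "complex mat"
  assumes "k \<noteq> 0" "k \<cdot>\<^sub>m A = k \<cdot>\<^sub>m B" "A \<in> carrier_mat n m" "B \<in> carrier_mat n m"
  shows "A = B"
proof (rule eq_matI)
  fix i j assume "i < dim_row B" "j < dim_col B"
  then have "k * A $$ (i,j) = k * B $$ (i,j)"
    using arg_cong[OF assms(2), of "\<lambda>M. M $$ (i,j)"] assms(3,4) by simp
  then show "A $$ (i,j) = B $$ (i,j)" using assms(1) by simp
qed (use assms in auto)

lemma laplace_repl:
  assumes X: "X \<in> carrier_mat d d" and Y: "Y \<in> carrier_mat d d" and i: "i < d" and j: "j < d"
  shows "(Y * adj_mat X) $$ (i,j) = det (mat d d (\<lambda>(r,k). if r = j then Y $$ (i,k) else X $$ (r,k)))"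
proof -
  define B where "B = mat d d (\<lambda>(r,k). if r = j then Y $$ (i,k) else X $$ (r,k))"
  have "(Y * adj_mat X) $$ (i,j) = (\<Sum>k<d. Y $$ (i,k) * cofactor X j k)"
    unfolding times_mat_def scalar_prod_def adj_mat_def using i j X Y by (auto intro: sum.cong)
  also have "\<dots> = (\<Sum>k<d. B $$ (j,k) * cofactor B j k)"
  proof (rule sum.cong[OF refl])
    fix k assume k: "k \<in> {..<d}"
    have "mat_delete B j k = mat_delete X j k"
      unfolding mat_delete_def B_def using X j k by (intro eq_matI) auto
    then show "Y $$ (i,k) * cofactor X j k = B $$ (j,k) * cofactor B j k"
      using k j by (simp add: cofactor_def B_def)
  qed
  also have "\<dots> = det B"
    by (rule laplace_expansion_row[symmetric]) (use j in \<open>auto simp: B_def\<close>)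
  finally show ?thesis unfolding B_def .
qed

lemma adj_map:
  fixes h :: "'a :: comm_ring_1 \<Rightarrow> 'b :: comm_ring_1"
  assumes h: "comm_ring_hom h" and A: "A \<in> carrier_mat n n"
  shows "adj_mat (map_mat h A) = map_mat h (adj_mat A)"
proof (rule eq_matI)
  fix i j assume ij: "i < dim_row (map_mat h (adj_mat A))" "j < dim_col (map_mat h (adj_mat A))"
  have "mat_delete (map_mat h A) j i = map_mat h (mat_delete A j i)"
    unfolding mat_delete_def using A by (intro eq_matI) auto
  interpret comm_ring_hom h by (rule h)
  have "cofactor (map_mat h A) j i = h (cofactor A j i)"
    unfolding cofactor_def \<open>mat_delete (map_mat h A) j i = map_mat h (mat_delete A j i)\<close>
    by (simp add: hom_distribs)
  then show "adj_mat (map_mat h A) $$ (i, j) = map_mat h (adj_mat A) $$ (i, j)"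
    using ij A by (simp add: adj_mat_def)
qed (use A in \<open>auto simp: adj_mat_def\<close>)

lemma det_adj:
  fixes X :: "complex mat"
  assumes X: "X \<in> carrier_mat d d" and d: "d \<ge> 1" and nz: "det X \<noteq> 0"
  shows "det (adj_mat X) = det X ^ (d - 1)"
proof -
  have "det X * det (adj_mat X) = det (X * adj_mat X)" using det_mult[OF X adj_mat(1)[OF X]] by simp
  also have "\<dots> = det X ^ d" using adj_mat(2)[OF X] by simp
  also have "\<dots> = det X * det X ^ (d - 1)" using d by (simp add: power_eq_if)
  finally show ?thesis using nz by simp
qed

lemma smult_mult_mat2:
  assumes "A \<in> carrier_mat n m" "B \<in> carrier_mat m l"
  shows "(a \<cdot>\<^sub>m A) * (b \<cdot>\<^sub>m B) = (a * b) \<cdot>\<^sub>m (A * (B :: 'a :: comm_ring_1 mat))"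
  by (rule eq_matI) (use assms in \<open>auto simp: scalar_prod_def sum_distrib_left mult_ac\<close>)

lemma pointwise_a:
  fixes X Y Q R :: "complex mat"
  assumes car: "X \<in> carrier_mat d d" "Y \<in> carrier_mat d d" "Q \<in> carrier_mat d d" "R \<in> carrier_mat d d"
  and c: "c \<noteq> 0"
  and hq: "Y * adj_mat X = c \<cdot>\<^sub>m Q" and hr: "X * adj_mat Y = c \<cdot>\<^sub>m R"
  and he: "det X = c * e" and hd: "det Y = c * \<delta>"
  shows "R * Q = (e * \<delta>) \<cdot>\<^sub>m 1\<^sub>m d"
proof -
  note adjc = adj_mat(1)[OF car(1)] adj_mat(1)[OF car(2)]
  have "(c * c) \<cdot>\<^sub>m (R * Q) = (c \<cdot>\<^sub>m R) * (c \<cdot>\<^sub>m Q)" by (rule smult_mult_mat2[OF car(4) car(3), symmetric])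
  also have "\<dots> = (X * adj_mat Y) * (Y * adj_mat X)" by (simp add: hq hr)
  also have "\<dots> = X * (adj_mat Y * (Y * adj_mat X))"
    by (rule assoc_mult_mat[OF car(1) adjc(2) mult_carrier_mat[OF car(2) adjc(1)]])
  also have "adj_mat Y * (Y * adj_mat X) = (adj_mat Y * Y) * adj_mat X"
    by (rule assoc_mult_mat[symmetric, OF adjc(2) car(2) adjc(1)])
  also have "\<dots> = det Y \<cdot>\<^sub>m adj_mat X"
    unfolding adj_mat(3)[OF car(2)] mult_smult_assoc_mat[OF one_carrier_mat adjc(1)] left_mult_one_mat[OF adjc(1)] ..
  also have "X * (det Y \<cdot>\<^sub>m adj_mat X) = det Y \<cdot>\<^sub>m (det X \<cdot>\<^sub>m 1\<^sub>m d)"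
    unfolding mult_smult_distrib[OF car(1) adjc(1)] adj_mat(2)[OF car(1)] ..
  also have "\<dots> = (c * c) \<cdot>\<^sub>m ((e * \<delta>) \<cdot>\<^sub>m 1\<^sub>m d)" by (simp add: smult_smult_mat' he hd mult_ac)
  finally have "(c * c) \<cdot>\<^sub>m (R * Q) = (c * c) \<cdot>\<^sub>m ((e * \<delta>) \<cdot>\<^sub>m 1\<^sub>m d)" .
  from smult_cancel_mat[OF _ this, of d d] show ?thesis using c car by auto
qed

lemma pointwise_b:
  fixes X Y Q :: "complex mat"
  assumes car: "X \<in> carrier_mat d d" "Y \<in> carrier_mat d d" "Q \<in> carrier_mat d d"
  and d: "d \<ge> 1" and c: "c \<noteq> 0" and e: "e \<noteq> 0"
  and hq: "Y * adj_mat X = c \<cdot>\<^sub>m Q"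
  and he: "det X = c * e" and hd: "det Y = c * \<delta>"
  shows "det Q = e ^ (d - 1) * \<delta>"
proof -
  have "c ^ d * det Q = det (Y * adj_mat X)" using car hq by simp
  also have "\<dots> = det Y * det X ^ (d - 1)"
    using det_mult[OF car(2) adj_mat(1)[OF car(1)]] det_adj[OF car(1) d] he c e by simp
  also have "\<dots> = c ^ d * (e ^ (d - 1) * \<delta>)"
  proof -
    have "c ^ d = c * c ^ (d - 1)" using d by (cases d) auto
    then show ?thesis by (simp add: he hd power_mult_distrib mult_ac)
  qed
  finally show ?thesis using c by simp
qed

lemma one_smult_mat'[simp]: "1 \<cdot>\<^sub>m A = (A :: 'a :: comm_ring_1 mat)"
  by (rule eq_matI) auto

lemma poly_eq_on:
  fixes p q r :: "complex poly"
  assumes r: "r \<noteq> 0" and eq: "\<And>z. poly r z \<noteq> 0 \<Longrightarrow> poly p z = poly q z"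
  shows "p = q"
proof (rule ccontr)
  assume "p \<noteq> q"
  then have "p - q \<noteq> 0" by simp
  then have "finite ({z. poly (p - q) z = 0} \<union> {z. poly r z = 0})"
    using poly_roots_finite[OF \<open>p - q \<noteq> 0\<close>] poly_roots_finite[OF r] by (simp only: finite_Un)
  then obtain z where "z \<notin> {z. poly (p - q) z = 0} \<union> {z. poly r z = 0}"
    using ex_new_if_finite[OF infinite_UNIV_char_0] by blast
  then show False using eq[of z] by simp
qed

lemma degree_le_pred:
  fixes p :: "complex poly"
  assumes "degree p \<le> d" "coeff p d = 0" "d \<ge> 1"
  shows "degree p \<le> d - 1"
proof (rule ccontr)
  assume "\<not> degree p \<le> d - 1"
  then have "degree p = d" using assms by auto
  then have "p = 0" using assms(2) by (metis leading_coeff_0_iff)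
  then show False using \<open>degree p = d\<close> \<open>\<not> degree p \<le> d - 1\<close> by simp
qed

lemma poly_const_deg0:
  fixes p :: "complex poly"
  assumes "degree p = 0"
  shows "poly p z = poly p 0"
proof -
  obtain a where "p = [:a:]" using degree_eq_zeroE[OF assms] by blast
  then show ?thesis by simp
qed

lemma ev_hom: "comm_ring_hom (\<lambda>p. poly p (z::complex))" by unfold_locales auto

lemma det_ev: "det (map_mat (\<lambda>p. poly p z) (A :: complex poly mat)) = poly (det A) z"
  by (rule comm_ring_hom.hom_det[OF ev_hom])

context
  fixes d :: nat and Xf Yf :: "complex \<Rightarrow> complex \<Rightarrow> complex mat" and c :: "complex \<Rightarrow> complex \<Rightarrow> complex"
    and he hd :: "nat \<Rightarrow> complex" and hq hr :: "nat \<Rightarrow> nat \<Rightarrow> nat \<Rightarrow> complex"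
  assumes d1: "d \<ge> 1"
  and carX: "\<And>s t. Xf s t \<in> carrier_mat d d" and carY: "\<And>s t. Yf s t \<in> carrier_mat d d"
  and cnz: "\<And>s t. (s,t) \<noteq> (0,0) \<Longrightarrow> c s t \<noteq> 0"
  and fe: "\<And>s t. (s,t) \<noteq> (0,0) \<Longrightarrow> det (Xf s t) = c s t * hform d he s t"
  and fd: "\<And>s t. (s,t) \<noteq> (0,0) \<Longrightarrow> det (Yf s t) = c s t * hform d hd s t"
  and fq: "\<And>s t i j. (s,t) \<noteq> (0,0) \<Longrightarrow> i < d \<Longrightarrow> j < d \<Longrightarrow>
           (Yf s t * adj_mat (Xf s t)) $$ (i,j) = c s t * hform d (hq i j) s t"
  and fr: "\<And>s t i j. (s,t) \<noteq> (0,0) \<Longrightarrow> i < d \<Longrightarrow> j < d \<Longrightarrow>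
           (Xf s t * adj_mat (Yf s t)) $$ (i,j) = c s t * hform d (hr i j) s t"
  and p10: "Yf 1 0 = 0\<^sub>m d d" "det (Xf 1 0) \<noteq> 0"
  and p01: "Xf 0 1 = 0\<^sub>m d d" "det (Yf 0 1) \<noteq> 0"
  and p11: "Xf 1 1 = Yf 1 1" "det (Xf 1 1) \<noteq> 0"
begin

definition "Qz z = mat d d (\<lambda>(i,j). poly (hp d (hq i j)) z)"
definition "Rz z = mat d d (\<lambda>(i,j). poly (hp d (hr i j)) z)"

lemma Qz_car[simp]: "Qz z \<in> carrier_mat d d" and Rz_car[simp]: "Rz z \<in> carrier_mat d d"
  by (auto simp: Qz_def Rz_def)

lemma nz1: "(1::complex, z) \<noteq> (0,0)" by simp

lemma chart_q: "Yf 1 z * adj_mat (Xf 1 z) = c 1 z \<cdot>\<^sub>m Qz z"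
proof (rule eq_matI)
  fix i j assume "i < dim_row (c 1 z \<cdot>\<^sub>m Qz z)" "j < dim_col (c 1 z \<cdot>\<^sub>m Qz z)"
  then show "(Yf 1 z * adj_mat (Xf 1 z)) $$ (i, j) = (c 1 z \<cdot>\<^sub>m Qz z) $$ (i, j)"
    using fq[of 1 z i j] nz1 by (simp add: Qz_def poly_hp)
qed (use carX[of 1 z] carY[of 1 z] adj_mat(1)[OF carX[of 1 z]] in \<open>auto simp: Qz_def\<close>)

lemma chart_r: "Xf 1 z * adj_mat (Yf 1 z) = c 1 z \<cdot>\<^sub>m Rz z"
proof (rule eq_matI)
  fix i j assume "i < dim_row (c 1 z \<cdot>\<^sub>m Rz z)" "j < dim_col (c 1 z \<cdot>\<^sub>m Rz z)"
  then show "(Xf 1 z * adj_mat (Yf 1 z)) $$ (i, j) = (c 1 z \<cdot>\<^sub>m Rz z) $$ (i, j)"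
    using fr[of 1 z i j] nz1 by (simp add: Rz_def poly_hp)
qed (use carX[of 1 z] carY[of 1 z] adj_mat(1)[OF carY[of 1 z]] in \<open>auto simp: Rz_def\<close>)

lemma chart_e: "det (Xf 1 z) = c 1 z * poly (hp d he) z"
  using fe[OF nz1] by (simp add: poly_hp)

lemma chart_d: "det (Yf 1 z) = c 1 z * poly (hp d hd) z"
  using fd[OF nz1] by (simp add: poly_hp)

lemma c1nz: "c 1 z \<noteq> 0" using cnz[OF nz1] .

lemma hd0: "hform d hd 0 1 \<noteq> 0"
  using fd[of 0 1] p01(2) by auto

lemma he10: "hform d he 1 0 \<noteq> 0"
  using fe[of 1 0] p10(2) by auto

lemma hr01: "i < d \<Longrightarrow> j < d \<Longrightarrow> hform d (hr i j) 0 1 = 0"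
proof -
  assume ij: "i < d" "j < d"
  have "(Xf 0 1 * adj_mat (Yf 0 1)) $$ (i,j) = 0"
    using ij p01(1) adj_mat(1)[OF carY[of 0 1]] by simp
  then show ?thesis using fr[of 0 1 i j] ij cnz[of 0 1] by auto
qed

lemma hq10: "i < d \<Longrightarrow> j < d \<Longrightarrow> hform d (hq i j) 1 0 = 0"
proof -
  assume ij: "i < d" "j < d"
  have "(Yf 1 0 * adj_mat (Xf 1 0)) $$ (i,j) = 0"
    using ij p10(1) adj_mat(1)[OF carX[of 1 0]] by simp
  then show ?thesis using fq[of 1 0 i j] ij cnz[of 1 0] by auto
qed

lemma step_A: "degree (hp d he) = 0"
proof -
  define pd where "pd = hp d hd"
  define pe where "pe = hp d he"
  define PR where "PR = mat d d (\<lambda>(i,j). hp d (hr i j))"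
  have PRc: "PR \<in> carrier_mat d d" by (simp add: PR_def)
  have Rz_ev: "Rz z = map_mat (\<lambda>p. poly p z) PR" for z
    by (rule eq_matI) (auto simp: Rz_def PR_def)
  have pd0: "pd \<noteq> 0" using hd0 coeff_hp_top'[of d hd] unfolding pd_def by auto
  have dpd: "degree pd = d"
    using degree_hp[of d hd] hd0 coeff_hp_top'[of d hd] le_degree[of pd d] unfolding pd_def by auto
  have pe0: "pe \<noteq> 0" using he10 poly_hp[of d he 0] unfolding pe_def by auto
  have eq: "det PR = pd ^ (d - 1) * pe"
  proof (rule poly_eq_on[OF pd0])
    fix z assume "poly pd z \<noteq> 0"
    have "det (Rz z) = poly pd z ^ (d - 1) * poly pe z"
      by (rule pointwise_b[OF carY carX Rz_car d1 c1nz \<open>poly pd z \<noteq> 0\<close> chart_r])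
         (use chart_d chart_e in \<open>auto simp: pd_def pe_def\<close>)
    then show "poly (det PR) z = poly (pd ^ (d - 1) * pe) z"
      by (simp add: Rz_ev det_ev)
  qed
  have "degree (det PR) \<le> (d - 1) * d"
  proof (rule degree_det_le[OF _ PRc])
    fix i j assume ij: "i < d" "j < d"
    have "degree (hp d (hr i j)) \<le> d - 1"
      by (rule degree_le_pred[OF degree_hp _ d1]) (simp add: coeff_hp_top' hr01 ij)
    then show "degree (PR $$ (i,j)) \<le> d - 1" using ij by (simp add: PR_def)
  qed
  moreover have "degree (pd ^ (d - 1) * pe) = (d - 1) * d + degree pe"
    using pd0 pe0 dpd by (simp add: degree_mult_eq degree_power_eq)
  ultimately show ?thesis using eq unfolding pe_def by simp
qed


definition "aa = poly (hp d he) 0"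

lemma aa_nz: "aa \<noteq> 0" using he10 poly_hp[of d he 0] by (simp add: aa_def)

lemma pe_const: "poly (hp d he) z = aa"
  using poly_const_deg0[OF step_A] by (simp add: aa_def)

lemma chart_e': "det (Xf 1 z) = c 1 z * aa" using chart_e pe_const by simp

lemma pd_nz: "hp d hd \<noteq> 0" using hd0 coeff_hp_top'[of d hd] by auto

lemma deg_pd: "degree (hp d hd) = d"
  using degree_hp[of d hd] hd0 coeff_hp_top'[of d hd] le_degree[of "hp d hd" d] by auto

definition "GP = mat d d (\<lambda>(i,j). hp d (hq i j) div [:0,1:])"

lemma GP_car[simp]: "GP \<in> carrier_mat d d" by (simp add: GP_def)

definition "Gz z = map_mat (\<lambda>p. poly p z) GP"

lemma Gz_car[simp]: "Gz z \<in> carrier_mat d d" by (simp add: Gz_def)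

lemma pq_factor: "i < d \<Longrightarrow> j < d \<Longrightarrow> hp d (hq i j) = [:0,1:] * (hp d (hq i j) div [:0,1:])"
proof -
  assume ij: "i < d" "j < d"
  have "poly (hp d (hq i j)) 0 = 0" using hq10[OF ij] by (simp add: poly_hp)
  then have "[:0,1:] dvd hp d (hq i j)" using poly_eq_0_iff_dvd[of "hp d (hq i j)" 0] by simp
  then show ?thesis by (rule dvd_mult_div_cancel[symmetric])
qed

lemma pq_factor': "i < d \<Longrightarrow> j < d \<Longrightarrow> hp d (hq i j) = pCons 0 (hp d (hq i j) div [:0,1:])"
  using pq_factor by simp

lemma Qz_Gz: "Qz z = z \<cdot>\<^sub>m Gz z"
proof (rule eq_matI)
  fix i j assume ij: "i < dim_row (z \<cdot>\<^sub>m Gz z)" "j < dim_col (z \<cdot>\<^sub>m Gz z)"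
  then have ij': "i < d" "j < d" by (auto simp: Gz_def GP_def)
  define g where "g = hp d (hq i j) div [:0,1:]"
  have g: "hp d (hq i j) = [:0,1:] * g" using pq_factor[OF ij'] unfolding g_def .
  have "poly (hp d (hq i j)) z = z * poly g z" unfolding g by simp
  then show "Qz z $$ (i, j) = (z \<cdot>\<^sub>m Gz z) $$ (i, j)"
    using ij' by (simp add: Qz_def Gz_def GP_def g_def)
qed (auto simp: Qz_def Gz_def GP_def)

definition "kap = poly (det GP) 0"

lemma step_B: "kap \<noteq> 0 \<and> (\<forall>z. det (Gz z) = kap) \<and> (\<forall>z. poly (hp d hd) z = kap / aa ^ (d - 1) * z ^ d)"
proof -
  define PQ where "PQ = mat d d (\<lambda>(i,j). hp d (hq i j))"
  have PQ: "PQ = [:0,1:] \<cdot>\<^sub>m GP"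
    by (rule eq_matI) (auto simp: PQ_def GP_def intro!: pq_factor')
  have dPQ: "det PQ = [:0,1:] ^ d * det GP" unfolding PQ by (simp add: GP_def)
  have Qz_ev: "Qz z = map_mat (\<lambda>p. poly p z) PQ" for z
    by (rule eq_matI) (auto simp: Qz_def PQ_def)
  have "det PQ = smult (aa ^ (d - 1)) (hp d hd)"
  proof (rule poly_eq_on[of 1])
    fix z :: complex
    have "det (Qz z) = aa ^ (d - 1) * poly (hp d hd) z"
      by (rule pointwise_b[OF carX carY Qz_car d1 c1nz aa_nz chart_q chart_e' chart_d])
    then show "poly (det PQ) z = poly (smult (aa ^ (d - 1)) (hp d hd)) z"
      by (simp add: Qz_ev det_ev)
  qed simp
  then have eq: "[:0,1:] ^ d * det GP = smult (aa ^ (d - 1)) (hp d hd)" using dPQ by simp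
  have rnz: "smult (aa ^ (d - 1)) (hp d hd) \<noteq> 0" using aa_nz pd_nz by simp
  then have gnz: "det GP \<noteq> 0" using eq by auto
  have "degree ([:0,1:] ^ d * det GP) = d + degree (det GP)"
    using gnz by (simp add: degree_mult_eq degree_power_eq)
  moreover have "degree (smult (aa ^ (d - 1)) (hp d hd)) = d" using aa_nz deg_pd by simp
  ultimately have dg: "degree (det GP) = 0" using eq by simp
  have k: "poly (det GP) z = kap" for z using poly_const_deg0[OF dg] by (simp add: kap_def)
  have knz: "kap \<noteq> 0"
  proof
    assume "kap = 0"
    then have "poly (det GP) = poly 0" using k by auto
    then show False using gnz by (simp add: poly_eq_poly_eq_iff)
  qed
  have "det (Gz z) = kap" for z using k by (simp add: Gz_def det_ev)
  moreover have "poly (hp d hd) z = kap / aa ^ (d - 1) * z ^ d" for z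
  proof -
    have "z ^ d * kap = aa ^ (d - 1) * poly (hp d hd) z"
      using arg_cong[OF eq, of "\<lambda>p. poly p z"] k by (simp add: poly_power)
    then show ?thesis using aa_nz by (simp add: field_simps)
  qed
  ultimately show ?thesis using knz by blast
qed


lemma kap_nz: "kap \<noteq> 0" and detGz: "det (Gz z) = kap"
  and pd_val: "poly (hp d hd) z = kap / aa ^ (d - 1) * z ^ d"
  using step_B by auto

definition "bb = kap / aa ^ (d - 1)"

lemma RG: "z \<noteq> 0 \<Longrightarrow> Rz z * Gz z = (aa * bb * z ^ (d - 1)) \<cdot>\<^sub>m 1\<^sub>m d"
proof -
  assume z: "z \<noteq> 0"
  have "Rz z * Qz z = (aa * poly (hp d hd) z) \<cdot>\<^sub>m 1\<^sub>m d"
    by (rule pointwise_a[OF carX carY Qz_car Rz_car c1nz chart_q chart_r chart_e' chart_d])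
  also have "aa * poly (hp d hd) z = z * (aa * bb * z ^ (d - 1))"
    using d1 by (simp add: pd_val bb_def power_eq_if)
  finally have "z \<cdot>\<^sub>m (Rz z * Gz z) = z \<cdot>\<^sub>m ((aa * bb * z ^ (d - 1)) \<cdot>\<^sub>m 1\<^sub>m d)"
    unfolding Qz_Gz mult_smult_distrib[OF Rz_car Gz_car] by (simp add: smult_smult_mat')
  from smult_cancel_mat[OF z this, of d d] show ?thesis using mult_carrier_mat[OF Rz_car Gz_car] by simp
qed

lemma adjGz_const: "z \<noteq> 0 \<Longrightarrow> adj_mat (Gz z) = adj_mat (Gz 1)"
proof -
  assume z: "z \<noteq> 0"
  note adjc = adj_mat(1)[OF Gz_car]
  have "kap \<cdot>\<^sub>m Rz w = (aa * bb * w ^ (d - 1)) \<cdot>\<^sub>m adj_mat (Gz w)" if w: "w \<noteq> 0" for w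
  proof -
    have "Rz w * Gz w * adj_mat (Gz w) = Rz w * (Gz w * adj_mat (Gz w))"
      by (rule assoc_mult_mat[OF Rz_car Gz_car adjc])
    also have "\<dots> = kap \<cdot>\<^sub>m Rz w"
      unfolding adj_mat(2)[OF Gz_car] detGz mult_smult_distrib[OF Rz_car one_carrier_mat] right_mult_one_mat[OF Rz_car] ..
    finally have 1: "Rz w * Gz w * adj_mat (Gz w) = kap \<cdot>\<^sub>m Rz w" .
    have "Rz w * Gz w * adj_mat (Gz w) = (aa * bb * w ^ (d - 1)) \<cdot>\<^sub>m adj_mat (Gz w)"
      unfolding RG[OF w] mult_smult_assoc_mat[OF one_carrier_mat adjc] left_mult_one_mat[OF adjc] ..
    then show ?thesis using 1 by simp
  qed
  note ent = this
  have abnz: "aa * bb \<noteq> 0" using aa_nz kap_nz by (simp add: bb_def)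
  define AG where "AG = adj_mat GP"
  have AGc: "AG \<in> carrier_mat d d" using adj_mat(1)[OF GP_car] by (simp add: AG_def)
  have adjev: "adj_mat (Gz w) = map_mat (\<lambda>p. poly p w) AG" for w
    unfolding Gz_def AG_def by (rule adj_map[OF ev_hom GP_car])
  have cst: "poly (AG $$ (i,j)) w = poly (AG $$ (i,j)) 0" if ij: "i < d" "j < d" for i j w
  proof -
    let ?r = "hp d (hr i j)"
    have eqp: "smult kap ?r = smult (aa * bb) (monom 1 (d - 1) * AG $$ (i,j))"
    proof (rule poly_eq_on[of "[:0,1:]"])
      fix z :: complex assume "poly [:0,1:] z \<noteq> 0"
      then have z: "z \<noteq> 0" by simp
      have "(kap \<cdot>\<^sub>m Rz z) $$ (i,j) = ((aa * bb * z ^ (d - 1)) \<cdot>\<^sub>m adj_mat (Gz z)) $$ (i,j)"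
        using ent[OF z] by simp
      then show "poly (smult kap ?r) z = poly (smult (aa * bb) (monom 1 (d - 1) * AG $$ (i,j))) z"
        using ij AGc by (simp add: Rz_def adjev poly_monom mult_ac)
    qed simp
    have "degree ?r \<le> d - 1"
      by (rule degree_le_pred[OF degree_hp _ d1]) (simp add: coeff_hp_top' hr01 ij)
    then have "degree (smult (aa * bb) (monom 1 (d - 1) * AG $$ (i,j))) \<le> d - 1"
      using eqp degree_smult_le[of kap ?r] by simp
    then have "degree (AG $$ (i,j)) = 0"
      using abnz by (cases "AG $$ (i,j) = 0") (auto simp: degree_mult_eq degree_monom_eq)
    then show ?thesis by (rule poly_const_deg0)
  qed
  show ?thesis
  proof (rule eq_matI)
    fix i j assume "i < dim_row (adj_mat (Gz 1))" "j < dim_col (adj_mat (Gz 1))"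
    then have ij: "i < d" "j < d" using adj_mat(1)[OF Gz_car[of 1]] by auto
    show "adj_mat (Gz z) $$ (i, j) = adj_mat (Gz 1) $$ (i, j)"
      using ij AGc cst[OF ij, of z] cst[OF ij, of 1] by (simp add: adjev)
  qed (use adj_mat(1)[OF Gz_car[of 1]] adj_mat(1)[OF Gz_car[of z]] in auto)
qed

lemma Gz_const: "z \<noteq> 0 \<Longrightarrow> Gz z = Gz 1"
proof -
  assume z: "z \<noteq> 0"
  note adjc = adj_mat(1)[OF Gz_car]
  have "kap \<cdot>\<^sub>m Gz z = Gz z * (kap \<cdot>\<^sub>m 1\<^sub>m d)"
    unfolding mult_smult_distrib[OF Gz_car one_carrier_mat] right_mult_one_mat[OF Gz_car] ..
  also have "\<dots> = Gz z * (adj_mat (Gz 1) * Gz 1)" unfolding adj_mat(3)[OF Gz_car] detGz ..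
  also have "\<dots> = (Gz z * adj_mat (Gz z)) * Gz 1"
    unfolding adjGz_const[OF z] by (rule assoc_mult_mat[symmetric, OF Gz_car adjc Gz_car])
  also have "\<dots> = kap \<cdot>\<^sub>m Gz 1"
    unfolding adj_mat(2)[OF Gz_car] detGz mult_smult_assoc_mat[OF one_carrier_mat Gz_car] left_mult_one_mat[OF Gz_car] ..
  finally show ?thesis using smult_cancel_mat[OF kap_nz _ Gz_car Gz_car] by blast
qed

lemma Qz_lin: "Qz z = z \<cdot>\<^sub>m Gz 1"
proof (cases "z = 0")
  case True
  then show ?thesis unfolding Qz_Gz by (intro eq_matI) (auto simp: Gz_def)
next
  case False
  have "Gz z = Gz 1" by (rule Gz_const[OF False])
  then show ?thesis by (simp add: Qz_Gz)
qed

lemma pointwise_E: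
  fixes X Y G :: "complex mat"
  assumes X: "X \<in> carrier_mat d d" and Y: "Y \<in> carrier_mat d d" and G: "G \<in> carrier_mat d d"
  and c: "c' \<noteq> 0" and dX: "det X = c' * aa" and q: "Y * adj_mat X = c' \<cdot>\<^sub>m G"
  shows "aa \<cdot>\<^sub>m Y = G * X"
proof -
  note adjc = adj_mat(1)[OF X]
  have "(c' * aa) \<cdot>\<^sub>m Y = Y * (det X \<cdot>\<^sub>m 1\<^sub>m d)"
    unfolding mult_smult_distrib[OF Y one_carrier_mat] dX using Y by simp
  also have "\<dots> = Y * (adj_mat X * X)" unfolding adj_mat(3)[OF X] ..
  also have "\<dots> = Y * adj_mat X * X" by (rule assoc_mult_mat[symmetric, OF Y adjc X])
  also have "\<dots> = c' \<cdot>\<^sub>m (G * X)" unfolding q by (rule mult_smult_assoc_mat[OF G X])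
  finally have "c' \<cdot>\<^sub>m (aa \<cdot>\<^sub>m Y) = c' \<cdot>\<^sub>m (G * X)" by (simp add: smult_smult_mat')
  from smult_cancel_mat[OF c this, of d d] show ?thesis using X Y G by auto
qed

lemma G1_val: "Gz 1 = aa \<cdot>\<^sub>m 1\<^sub>m d"
proof -
  let ?X = "Xf 1 1"
  have "Yf 1 1 * adj_mat (Xf 1 1) = c 1 1 \<cdot>\<^sub>m Gz 1" using chart_q[of 1] Qz_lin[of 1] by simp
  from pointwise_E[OF carX carY Gz_car c1nz chart_e' this]
  have e: "aa \<cdot>\<^sub>m ?X = Gz 1 * ?X" using p11(1) by simp
  note adjc = adj_mat(1)[OF carX[of 1 1]]
  have "det ?X \<cdot>\<^sub>m (aa \<cdot>\<^sub>m 1\<^sub>m d) = (aa \<cdot>\<^sub>m ?X) * adj_mat ?X"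
    unfolding mult_smult_assoc_mat[OF carX adjc] adj_mat(2)[OF carX] by (simp add: smult_smult_mat' mult.commute)
  also have "\<dots> = Gz 1 * (?X * adj_mat ?X)" unfolding e by (rule assoc_mult_mat[OF Gz_car carX adjc])
  also have "\<dots> = det ?X \<cdot>\<^sub>m Gz 1"
    unfolding adj_mat(2)[OF carX] mult_smult_distrib[OF Gz_car one_carrier_mat] right_mult_one_mat[OF Gz_car] ..
  finally have "det ?X \<cdot>\<^sub>m (aa \<cdot>\<^sub>m 1\<^sub>m d) = det ?X \<cdot>\<^sub>m Gz 1" .
  from smult_cancel_mat[OF p11(2) this _ Gz_car] show ?thesis by simp
qed

lemma hq_val: "i < d \<Longrightarrow> j < d \<Longrightarrow> hform d (hq i j) 1 z = (if i = j then z * aa else 0)"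
proof -
  assume ij: "i < d" "j < d"
  have "Qz z $$ (i,j) = (if i = j then z * aa else 0)" unfolding Qz_lin G1_val using ij by simp
  then show ?thesis using ij by (simp add: Qz_def poly_hp)
qed

theorem core_result:
  assumes st: "(s,t) \<noteq> (0,0)"
  shows "\<exists>T \<in> carrier_mat d d. det T \<noteq> 0 \<and> Xf s t = s \<cdot>\<^sub>m T \<and> Yf s t = t \<cdot>\<^sub>m T"
proof (cases "s = 0")
  case False
  define z where "z = t / s"
  define c' where "c' = c s t * s ^ d"
  have c': "c' \<noteq> 0" using cnz[OF st] False by (simp add: c'_def)
  have dX: "det (Xf s t) = c' * aa"
    using fe[OF st] hform_homog[OF False, of d he t] pe_const[of z] by (simp add: c'_def z_def poly_hp mult_ac)
  have q: "Yf s t * adj_mat (Xf s t) = c' \<cdot>\<^sub>m ((z * aa) \<cdot>\<^sub>m 1\<^sub>m d)"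
  proof (rule eq_matI)
    fix i j assume "i < dim_row (c' \<cdot>\<^sub>m ((z * aa) \<cdot>\<^sub>m 1\<^sub>m d))" "j < dim_col (c' \<cdot>\<^sub>m ((z * aa) \<cdot>\<^sub>m 1\<^sub>m d))"
    then have ij: "i < d" "j < d" by auto
    show "(Yf s t * adj_mat (Xf s t)) $$ (i, j) = (c' \<cdot>\<^sub>m ((z * aa) \<cdot>\<^sub>m 1\<^sub>m d)) $$ (i, j)"
      using fq[OF st ij] hform_homog[OF False, of d "hq i j" t] hq_val[OF ij, of z] ij
      by (simp add: c'_def z_def mult_ac)
  qed (use carX[of s t] carY[of s t] adj_mat(1)[OF carX[of s t]] in auto)
  have e: "aa \<cdot>\<^sub>m Yf s t = ((z * aa) \<cdot>\<^sub>m 1\<^sub>m d) * Xf s t"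
    by (rule pointwise_E[OF carX carY _ c' dX q]) simp
  have Y: "Yf s t = z \<cdot>\<^sub>m Xf s t"
  proof -
    have "aa \<cdot>\<^sub>m Yf s t = aa \<cdot>\<^sub>m (z \<cdot>\<^sub>m Xf s t)"
      unfolding e mult_smult_assoc_mat[OF one_carrier_mat carX] using carX[of s t] by (simp add: smult_smult_mat' mult.commute)
    from smult_cancel_mat[OF aa_nz this] show ?thesis using carX[of s t] carY[of s t] by auto
  qed
  define T where "T = (1 / s) \<cdot>\<^sub>m Xf s t"
  have "T \<in> carrier_mat d d" using carX[of s t] by (simp add: T_def)
  moreover have "det T \<noteq> 0" using dX c' aa_nz False carX[of s t] by (simp add: T_def)
  moreover have "Xf s t = s \<cdot>\<^sub>m T" using False carX[of s t] by (auto simp: T_def smult_smult_mat' intro!: eq_matI)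
  moreover have "Yf s t = t \<cdot>\<^sub>m T" using False carX[of s t] unfolding Y T_def z_def
    by (auto simp: smult_smult_mat' intro!: eq_matI)
  ultimately show ?thesis by blast
next
  case True
  then have t: "t \<noteq> 0" using st by simp
  note adjc = adj_mat(1)[OF carY[of s t]]
  have r0: "Xf s t * adj_mat (Yf s t) = 0\<^sub>m d d"
  proof (rule eq_matI)
    fix i j assume "i < dim_row (0\<^sub>m d d :: complex mat)" "j < dim_col (0\<^sub>m d d :: complex mat)"
    then have ij: "i < d" "j < d" by auto
    have "hform d (hr i j) 0 t = 0" using hr01[OF ij] by (simp add: hform_0t)
    then show "(Xf s t * adj_mat (Yf s t)) $$ (i, j) = (0\<^sub>m d d :: complex mat) $$ (i, j)"
      using fr[OF st ij] True ij by simp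
  qed (use carX[of s t] adjc in auto)
  have dY: "det (Yf s t) \<noteq> 0"
    using fd[OF st] True cnz[OF st] t hd0 by (simp add: hform_0t)
  have "det (Yf s t) \<cdot>\<^sub>m Xf s t = Xf s t * adj_mat (Yf s t) * Yf s t"
    unfolding assoc_mult_mat[OF carX adjc carY] adj_mat(3)[OF carY] mult_smult_distrib[OF carX one_carrier_mat]
    using carX[of s t] by simp
  also have "\<dots> = det (Yf s t) \<cdot>\<^sub>m 0\<^sub>m d d" unfolding r0 using carY[of s t] by simp
  finally have X0: "Xf s t = 0\<^sub>m d d" using smult_cancel_mat[OF dY _ carX] by auto
  define T where "T = (1 / t) \<cdot>\<^sub>m Yf s t"
  have "T \<in> carrier_mat d d" using carY[of s t] by (simp add: T_def)
  moreover have "det T \<noteq> 0" using dY t carY[of s t] by (simp add: T_def)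
  moreover have "Xf s t = s \<cdot>\<^sub>m T" using True X0 carY[of s t] by (auto simp: T_def intro!: eq_matI)
  moreover have "Yf s t = t \<cdot>\<^sub>m T" using t carY[of s t] by (auto simp: T_def smult_smult_mat' intro!: eq_matI)
  ultimately show ?thesis by blast
qed

end

lemma sum_split2: "(\<Sum>k<d+m. f k) = (\<Sum>k<d. f k) + (\<Sum>k<m. f (d+k :: nat))"
  by (induction m) (auto simp: add.assoc)

lemma frame_zero: "frame n d A \<Longrightarrow> n \<le> i \<or> d \<le> j \<Longrightarrow> A i j = 0"
  unfolding frame_def by blast

lemma frame_inj:
  assumes fr: "frame n d A" and c: "\<And>i. i < n \<Longrightarrow> (\<Sum>j<d. A i j * c j) = 0"
  shows "j < d \<Longrightarrow> c j = 0"
proof -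
  assume j: "j < d"
  from fr obtain I where I: "I \<in> dsubsets n d" "minor d A I \<noteq> 0" unfolding frame_def by blast
  let ?xs = "sorted_list_of_set I"
  have fin: "finite I" and cI: "card I = d" and sub: "I \<subseteq> {..<n}"
    using I(1) by (auto simp: dsubsets_def intro: finite_subset)
  have xs: "k < d \<Longrightarrow> ?xs ! k < n" for k
    using sub fin cI by (metis length_sorted_list_of_set lessThan_iff nth_mem set_sorted_list_of_set subsetD)
  have nz: "det (submat d A I) \<noteq> 0" using I(2) by (simp add: minor_det)
  have eq: "submat d A I *\<^sub>v vec d c = 0\<^sub>v d"
    by (rule eq_vecI) (auto simp: submat_def scalar_prod_def c xs atLeast0LessThan)
  have H: "det (submat d A I) = 0 \<longleftrightarrow> (\<exists>v. v \<in> carrier_vec d \<and> v \<noteq> 0\<^sub>v d \<and> submat d A I *\<^sub>v v = 0\<^sub>v d)"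
    by (rule det_0_iff_vec_prod_zero[OF submat_carrier])
  have "vec d c = 0\<^sub>v d" using H nz eq vec_carrier[of d c] by blast
  then show "c j = 0" using j by (metis index_vec index_zero_vec(1))
qed

lemma det_nz_crit:
  fixes A :: "complex mat"
  assumes A: "A \<in> carrier_mat m m"
  and h: "\<And>c. (\<And>i. i < m \<Longrightarrow> (\<Sum>k<m. A $$ (i,k) * c k) = 0) \<Longrightarrow> (\<And>k. k < m \<Longrightarrow> c k = 0)"
  shows "det A \<noteq> 0"
proof
  assume "det A = 0"
  then obtain v where v: "v \<in> carrier_vec m" "v \<noteq> 0\<^sub>v m" "A *\<^sub>v v = 0\<^sub>v m"
    using det_0_iff_vec_prod_zero[OF A] by auto
  have "(\<Sum>k<m. A $$ (i,k) * v $ k) = 0" if "i < m" for i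
    using arg_cong[OF v(3), of "\<lambda>x. x $ i"] A v(1) that by (simp add: scalar_prod_def atLeast0LessThan)
  then have "\<And>k. k < m \<Longrightarrow> v $ k = 0" using h by blast
  then have "v = 0\<^sub>v m" using v by (intro eq_vecI) auto
  then show False using v by simp
qed

lemma colspan_mem: "(\<lambda>i. \<Sum>j<d. A i j * c j) \<in> colspan d A"
  unfolding colspan_def by blast

lemma colspan_rel_sub:
  assumes "\<And>i j. j < d \<Longrightarrow> A i j = (\<Sum>k<d. B i k * T $$ (k,j))"
  shows "colspan d A \<subseteq> colspan d B"
proof
  fix w assume "w \<in> colspan d A"
  then obtain c where c: "\<And>i. w i = (\<Sum>j<d. A i j * c j)" unfolding colspan_def by blast
  have "w i = (\<Sum>k<d. B i k * (\<Sum>j<d. T $$ (k,j) * c j))" for i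
  proof -
    have "w i = (\<Sum>j<d. (\<Sum>k<d. B i k * T $$ (k,j)) * c j)" unfolding c by (rule sum.cong) (auto simp: assms)
    also have "\<dots> = (\<Sum>k<d. B i k * (\<Sum>j<d. T $$ (k,j) * c j))"
      unfolding sum_distrib_left sum_distrib_right by (subst sum.swap) (simp add: mult_ac)
    finally show ?thesis .
  qed
  then show "w \<in> colspan d B" unfolding colspan_def by auto
qed

lemma colspan_sub_T:
  assumes "colspan d A \<subseteq> colspan d B"
  shows "\<exists>T \<in> carrier_mat d d. \<forall>i j. j < d \<longrightarrow> A i j = (\<Sum>k<d. B i k * T $$ (k,j))"
proof -
  have ex: "\<exists>cj. j < d \<longrightarrow> (\<forall>i. A i j = (\<Sum>k<d. B i k * cj k))" for j
  proof (cases "j < d")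
    case True
    have "(\<lambda>i. \<Sum>l<d. A i l * (if l = j then 1 else 0)) \<in> colspan d B"
      by (rule subsetD[OF assms colspan_mem])
    moreover have "(\<Sum>l<d. A i l * (if l = j then 1 else 0)) = A i j" for i
    proof -
      have "(\<Sum>l<d. A i l * (if l = j then 1 else 0)) = (\<Sum>l<d. if l = j then A i l else 0)"
        by (rule sum.cong) auto
      then show ?thesis using True by simp
    qed
    ultimately have "(\<lambda>i. A i j) \<in> colspan d B" by simp
    then show ?thesis unfolding colspan_def by auto
  next
    case False
    then show ?thesis by blast
  qed
  then obtain C where C: "\<And>j. j < d \<Longrightarrow> (\<forall>i. A i j = (\<Sum>k<d. B i k * C j k))" by metis
  define T where "T = mat d d (\<lambda>(k,j). C j k)"
  have "T \<in> carrier_mat d d" by (simp add: T_def)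
  moreover have "\<forall>i j. j < d \<longrightarrow> A i j = (\<Sum>k<d. B i k * T $$ (k,j))"
    by (auto simp: T_def C intro!: sum.cong)
  ultimately show ?thesis by blast
qed

lemma rel_to_mat:
  assumes "\<And>i j. j < d \<Longrightarrow> A i j = (\<Sum>k<d. B i k * T $$ (k,j))" "T \<in> carrier_mat d d"
  shows "toM n d A = toM n d B * T"
  by (rule eq_matI) (use assms in \<open>auto simp: scalar_prod_def atLeast0LessThan intro!: sum.cong\<close>)

lemma mat_to_rel:
  assumes "toM n d A = toM n d B * T" "T \<in> carrier_mat d d"
  and zA: "\<And>i j. n \<le> i \<Longrightarrow> A i j = 0" and zB: "\<And>i j. n \<le> i \<Longrightarrow> B i j = 0"
  shows "\<And>i j. j < d \<Longrightarrow> A i j = (\<Sum>k<d. B i k * T $$ (k,j))"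
proof -
  fix i j assume j: "j < d"
  show "A i j = (\<Sum>k<d. B i k * T $$ (k,j))"
  proof (cases "i < n")
    case True
    have "toM n d A $$ (i,j) = (toM n d B * T) $$ (i,j)" using assms(1) by simp
    then show ?thesis using True j assms(2) by (simp add: scalar_prod_def atLeast0LessThan)
  next
    case False
    then show ?thesis using zA zB by simp
  qed
qed

definition minv :: "complex mat \<Rightarrow> complex mat" where
  "minv T = (1 / det T) \<cdot>\<^sub>m adj_mat T"

lemma minv:
  assumes T: "T \<in> carrier_mat d d" and nz: "det T \<noteq> 0"
  shows "minv T \<in> carrier_mat d d" "T * minv T = 1\<^sub>m d" "minv T * T = 1\<^sub>m d"
proof -
  show "minv T \<in> carrier_mat d d" using adj_mat(1)[OF T] by (simp add: minv_def)
  show "T * minv T = 1\<^sub>m d"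
    unfolding minv_def mult_smult_distrib[OF T adj_mat(1)[OF T]] adj_mat(2)[OF T]
    using nz by (simp add: smult_smult_mat')
  show "minv T * T = 1\<^sub>m d"
    unfolding minv_def mult_smult_assoc_mat[OF adj_mat(1)[OF T] T] adj_mat(3)[OF T]
    using nz by (simp add: smult_smult_mat')
qed

lemma colspan_eq_T:
  assumes rel: "toM n d A = toM n d B * T" and T: "T \<in> carrier_mat d d" "det T \<noteq> 0"
  and zA: "\<And>i j. n \<le> i \<Longrightarrow> A i j = 0" and zB: "\<And>i j. n \<le> i \<Longrightarrow> B i j = 0"
  shows "colspan d A = colspan d B"
proof
  show "colspan d A \<subseteq> colspan d B"
    by (rule colspan_rel_sub, rule mat_to_rel[OF rel T(1) zA zB])
  have r: "toM n d B = toM n d A * minv T"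
    unfolding rel using minv[OF T] T by (simp add: assoc_mult_mat[OF toM_carrier T(1)])
  show "colspan d B \<subseteq> colspan d A"
    by (rule colspan_rel_sub[OF mat_to_rel[OF r minv(1)[OF T] zB zA]])
qed

lemma rel_det_nz:
  assumes rel: "toM n d A = toM n d B * T" and T: "T \<in> carrier_mat d d" and fr: "frame n d A"
  shows "det T \<noteq> 0"
proof
  assume "det T = 0"
  then obtain v where v: "v \<in> carrier_vec d" "v \<noteq> 0\<^sub>v d" "T *\<^sub>v v = 0\<^sub>v d"
    using det_0_iff_vec_prod_zero[OF T] by auto
  have "toM n d A *\<^sub>v v = toM n d B *\<^sub>v (T *\<^sub>v v)"
    unfolding rel by (rule assoc_mult_mat_vec[OF toM_carrier T v(1)])
  also have "toM n d B *\<^sub>v (T *\<^sub>v v) = 0\<^sub>v n" unfolding v(3) by (rule eq_vecI) auto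
  finally have z: "toM n d A *\<^sub>v v = 0\<^sub>v n" .
  have "(\<Sum>j<d. A i j * v $ j) = 0" if i: "i < n" for i
    using arg_cong[OF z, of "\<lambda>x. x $ i"] i v(1) by (simp add: scalar_prod_def atLeast0LessThan)
  then have "\<And>j. j < d \<Longrightarrow> v $ j = 0" using frame_inj[OF fr] by blast
  then have "v = 0\<^sub>v d" using v(1) by (intro eq_vecI) auto
  then show False using v(2) by simp
qed

definition Gm :: "nat \<Rightarrow> cmat \<Rightarrow> cmat \<Rightarrow> complex mat" where
  "Gm d BU BW = toM (2*d) (2*d) (\<lambda>i k. if k < d then BU i k else BW i (k - d))"

lemma Gm_car[simp]: "Gm d BU BW \<in> carrier_mat (2*d) (2*d)" by (simp add: Gm_def)
lemma Gm_dim[simp]: "dim_row (Gm d BU BW) = 2*d" "dim_col (Gm d BU BW) = 2*d" by (auto simp: Gm_def)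

lemma Gm_block:
  assumes K: "K \<in> carrier_mat (2*d) m" and i: "i < 2*d" and j: "j < m"
  shows "(Gm d BU BW * K) $$ (i,j) = (\<Sum>k<d. BU i k * K $$ (k,j)) + (\<Sum>k<d. BW i k * K $$ (d+k,j))"
proof -
  have "(Gm d BU BW * K) $$ (i,j) = (\<Sum>k<2*d. Gm d BU BW $$ (i,k) * K $$ (k,j))"
    using K i j by (simp add: scalar_prod_def atLeast0LessThan)
  also have "\<dots> = (\<Sum>k<d+d. Gm d BU BW $$ (i,k) * K $$ (k,j))" by (simp add: mult_2)
  also have "\<dots> = (\<Sum>k<d. Gm d BU BW $$ (i,k) * K $$ (k,j)) + (\<Sum>k<d. Gm d BU BW $$ (i,d+k) * K $$ (d+k,j))"
    by (rule sum_split2)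
  also have "\<dots> = (\<Sum>k<d. BU i k * K $$ (k,j)) + (\<Sum>k<d. BW i k * K $$ (d+k,j))"
    using i by (simp add: Gm_def)
  finally show ?thesis .
qed

definition topM :: "nat \<Rightarrow> complex mat \<Rightarrow> complex mat" where
  "topM d K = mat d d (\<lambda>(i,j). K $$ (i,j))"
definition botM :: "nat \<Rightarrow> complex mat \<Rightarrow> complex mat" where
  "botM d K = mat d d (\<lambda>(i,j). K $$ (d+i,j))"

lemma topM_car[simp]: "topM d K \<in> carrier_mat d d" and botM_car[simp]: "botM d K \<in> carrier_mat d d"
  by (auto simp: topM_def botM_def)
lemma tb_dim[simp]: "dim_row (topM d K) = d" "dim_col (topM d K) = d" "dim_row (botM d K) = d" "dim_col (botM d K) = d"
  by (auto simp: topM_def botM_def)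

definition Sm :: "nat \<Rightarrow> complex \<Rightarrow> complex \<Rightarrow> complex mat" where
  "Sm d s t = mat (2*d) d (\<lambda>(k,j). (if k = j then s else 0) + (if k = d + j then t else 0))"

lemma Sm_car[simp]: "Sm d s t \<in> carrier_mat (2*d) d" by (simp add: Sm_def)
lemma Sm_dim[simp]: "dim_row (Sm d s t) = 2*d" "dim_col (Sm d s t) = d" by (auto simp: Sm_def)

lemma G_S:
  assumes zU: "\<And>i j. 2*d \<le> i \<Longrightarrow> BU i j = 0"
  shows "toM (2*d) d (\<lambda>i j. s * BU i j + t * BW i j) = Gm d BU BW * Sm d s t"
proof (rule eq_matI)
  fix i j assume ij: "i < dim_row (Gm d BU BW * Sm d s t)" "j < dim_col (Gm d BU BW * Sm d s t)"
  then have i: "i < 2*d" and j: "j < d" by auto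
  have "(Gm d BU BW * Sm d s t) $$ (i,j) = (\<Sum>k<d. BU i k * Sm d s t $$ (k,j)) + (\<Sum>k<d. BW i k * Sm d s t $$ (d+k,j))"
    by (rule Gm_block[OF Sm_car i j])
  also have "(\<Sum>k<d. BU i k * Sm d s t $$ (k,j)) = (\<Sum>k<d. if k = j then BU i k * s else 0)"
    using j by (intro sum.cong) (auto simp: Sm_def)
  also have "(\<Sum>k<d. BW i k * Sm d s t $$ (d+k,j)) = (\<Sum>k<d. if k = j then BW i k * t else 0)"
    using j by (intro sum.cong) (auto simp: Sm_def)
  finally show "toM (2*d) d (\<lambda>i j. s * BU i j + t * BW i j) $$ (i, j) = (Gm d BU BW * Sm d s t) $$ (i, j)"
    using i j by (simp add: mult_ac)
qed auto

lemma S_mult_T: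
  assumes T: "T \<in> carrier_mat d d"
  shows "Sm d s t * T = mat (2*d) d (\<lambda>(k,j). if k < d then s * T $$ (k,j) else t * T $$ (k-d,j))"
proof (rule eq_matI)
  fix k j assume kj: "k < dim_row (mat (2*d) d (\<lambda>(k,j). if k < d then s * T $$ (k,j) else t * T $$ (k-d,j)))"
    "j < dim_col (mat (2*d) d (\<lambda>(k,j). if k < d then s * T $$ (k,j) else t * T $$ (k-d,j)))"
  then have k: "k < 2*d" and j: "j < d" by auto
  have "(Sm d s t * T) $$ (k,j) = (\<Sum>l<d. ((if k = l then s else 0) + (if k = d + l then t else 0)) * T $$ (l,j))"
    using k j T by (simp add: Sm_def scalar_prod_def atLeast0LessThan)
  also have "\<dots> = (\<Sum>l<d. (if l = k then s * T $$ (l,j) else 0)) + (\<Sum>l<d. (if l = k - d \<and> d \<le> k then t * T $$ (l,j) else 0))"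
    unfolding sum.distrib[symmetric] by (intro sum.cong) (auto simp: distrib_right)
  also have "\<dots> = (if k < d then s * T $$ (k,j) else t * T $$ (k-d,j))"
    using k by (cases "k < d") auto
  finally show "(Sm d s t * T) $$ (k,j) = mat (2*d) d (\<lambda>(k,j). if k < d then s * T $$ (k,j) else t * T $$ (k-d,j)) $$ (k,j)"
    using k j by simp
qed (use T in auto)

lemma top_SmT: "T \<in> carrier_mat d d \<Longrightarrow> topM d (Sm d s t * T) = s \<cdot>\<^sub>m T"
  by (rule eq_matI) (auto simp: topM_def S_mult_T)

lemma bot_SmT: "T \<in> carrier_mat d d \<Longrightarrow> botM d (Sm d s t * T) = t \<cdot>\<^sub>m T"
  by (rule eq_matI) (auto simp: botM_def S_mult_T)

lemma SmT_eq:
  assumes K: "K \<in> carrier_mat (2*d) d" and T: "T \<in> carrier_mat d d"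
  and "topM d K = s \<cdot>\<^sub>m T" "botM d K = t \<cdot>\<^sub>m T"
  shows "K = Sm d s t * T"
proof (rule eq_matI)
  fix k j assume "k < dim_row (Sm d s t * T)" "j < dim_col (Sm d s t * T)"
  then have k: "k < 2*d" and j: "j < d" using T by auto
  show "K $$ (k,j) = (Sm d s t * T) $$ (k,j)"
  proof (cases "k < d")
    case True
    then have "topM d K $$ (k,j) = (s \<cdot>\<^sub>m T) $$ (k,j)" using assms(3) by simp
    then show ?thesis using True j T by (simp add: topM_def S_mult_T)
  next
    case False
    then have "botM d K $$ (k-d,j) = (t \<cdot>\<^sub>m T) $$ (k-d,j)" using assms(4) by simp
    then show ?thesis using False k j T by (simp add: botM_def S_mult_T)
  qed
qed (use K T in auto)

lemma top_sel: "K \<in> carrier_mat (2*d) d \<Longrightarrow> Lsel d (2*d) (\<lambda>i. i) * K = topM d K"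
  by (subst sel_mult) (auto simp: topM_def)

lemma bot_sel: "K \<in> carrier_mat (2*d) d \<Longrightarrow> Lsel d (2*d) (\<lambda>i. d + i) * K = botM d K"
  by (subst sel_mult) (auto simp: botM_def)

lemma q_sel:
  assumes K: "K \<in> carrier_mat (2*d) d" and ij: "i < d" "j < d"
  shows "det (Lsel d (2*d) (\<lambda>r. if r = j then d + i else r) * K) = (botM d K * adj_mat (topM d K)) $$ (i,j)"
proof -
  have "Lsel d (2*d) (\<lambda>r. if r = j then d + i else r) * K
      = mat d d (\<lambda>(r,k). if r = j then botM d K $$ (i,k) else topM d K $$ (r,k))"
    by (subst sel_mult[OF K]) (use ij in \<open>auto simp: topM_def botM_def intro!: eq_matI\<close>)
  then show ?thesis using laplace_repl[OF topM_car botM_car ij] by simp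
qed

lemma r_sel:
  assumes K: "K \<in> carrier_mat (2*d) d" and ij: "i < d" "j < d"
  shows "det (Lsel d (2*d) (\<lambda>r. if r = j then i else d + r) * K) = (topM d K * adj_mat (botM d K)) $$ (i,j)"
proof -
  have "Lsel d (2*d) (\<lambda>r. if r = j then i else d + r) * K
      = mat d d (\<lambda>(r,k). if r = j then topM d K $$ (i,k) else botM d K $$ (r,k))"
    by (subst sel_mult[OF K]) (use ij in \<open>auto simp: topM_def botM_def intro!: eq_matI\<close>)
  then show ?thesis using laplace_repl[OF botM_car topM_car ij] by simp
qed

lemma morph_fun:
  assumes L: "L \<in> carrier_mat d (2*d)" and Gi: "Gi \<in> carrier_mat (2*d) (2*d)"
  and mP: "\<And>s t I. (s,t) \<noteq> (0,0) \<Longrightarrow> I \<in> dsubsets (2*d) d \<Longrightarrow> minor d (Af s t) I = cf s t * hform d (P I) s t"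
  shows "\<exists>h. \<forall>s t. (s,t) \<noteq> (0,0) \<longrightarrow> det (L * (Gi * toM (2*d) d (Af s t))) = cf s t * hform d h s t"
proof -
  obtain lam where lam: "\<And>A. det ((L * Gi) * toM (2*d) d A) = (\<Sum>I\<in>dsubsets (2*d) d. lam I * minor d A I)"
    using cauchy_binet_ex[OF mult_carrier_mat[OF L Gi]] by auto
  define h where "h i = (\<Sum>I\<in>dsubsets (2*d) d. lam I * P I i)" for i
  have "det (L * (Gi * toM (2*d) d (Af s t))) = cf s t * hform d h s t" if st: "(s,t) \<noteq> (0,0)" for s t
  proof -
    have "det (L * (Gi * toM (2*d) d (Af s t))) = det ((L * Gi) * toM (2*d) d (Af s t))"
      using L Gi by (simp add: assoc_mult_mat[OF L Gi toM_carrier])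
    also have "\<dots> = (\<Sum>I\<in>dsubsets (2*d) d. lam I * (cf s t * hform d (P I) s t))"
      unfolding lam by (rule sum.cong) (auto simp: mP[OF st])
    also have "\<dots> = cf s t * hform d h s t"
      unfolding h_def hform_lin by (simp add: sum_distrib_left mult_ac)
    finally show ?thesis .
  qed
  then show ?thesis by blast
qed

lemma swap_sum: "(\<Sum>j<d. (\<Sum>k<d. A k * M k j) * c j) = (\<Sum>k<d. A k * (\<Sum>j<(d::nat). M k j * (c j :: complex)))"
  unfolding sum_distrib_left sum_distrib_right by (subst sum.swap) (simp add: mult_ac)

lemma colspan_cong: "(\<And>i j. j < d \<Longrightarrow> A i j = B i j) \<Longrightarrow> colspan d A = colspan d B"
  unfolding colspan_def by (auto intro!: sum.cong)

lemma G_det: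
  assumes fU: "frame (2*d) d BU" and fW: "frame (2*d) d BW"
  and int: "colspan d BU \<inter> colspan d BW = {\<lambda>_. 0}"
  shows "det (Gm d BU BW) \<noteq> 0"
proof (rule det_nz_crit[OF Gm_car])
  fix c assume h: "\<And>i. i < 2*d \<Longrightarrow> (\<Sum>k<2*d. Gm d BU BW $$ (i,k) * c k) = 0"
  have e: "(\<Sum>k<d. BU i k * c k) + (\<Sum>k<d. BW i k * c (d+k)) = 0" if i: "i < 2*d" for i
  proof -
    have "(\<Sum>k<2*d. Gm d BU BW $$ (i,k) * c k) = (\<Sum>k<d+d. Gm d BU BW $$ (i,k) * c k)" by (simp add: mult_2)
    also have "\<dots> = (\<Sum>k<d. Gm d BU BW $$ (i,k) * c k) + (\<Sum>k<d. Gm d BU BW $$ (i,d+k) * c (d+k))"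
      by (rule sum_split2)
    also have "\<dots> = (\<Sum>k<d. BU i k * c k) + (\<Sum>k<d. BW i k * c (d+k))"
      using i by (simp add: Gm_def)
    finally show ?thesis using h[OF i] by simp
  qed
  define w where "w = (\<lambda>i. \<Sum>k<d. BU i k * c k)"
  have wU: "w \<in> colspan d BU" unfolding w_def by (rule colspan_mem)
  have "w = (\<lambda>i. \<Sum>k<d. BW i k * (- c (d+k)))"
  proof
    fix i show "w i = (\<Sum>k<d. BW i k * (- c (d+k)))"
    proof (cases "i < 2*d")
      case True
      from e[OF True] show ?thesis by (simp add: w_def sum_negf eq_neg_iff_add_eq_0)
    next
      case False
      then show ?thesis by (simp add: w_def frame_zero[OF fU] frame_zero[OF fW])
    qed
  qed
  then have wW: "w \<in> colspan d BW" by (simp only: colspan_mem)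
  have "w = (\<lambda>_. 0)" using wU wW int by blast
  then have 1: "(\<Sum>k<d. BU i k * c k) = 0" for i using fun_cong[of w "\<lambda>_. 0" i] unfolding w_def by simp
  have cU: "c k = 0" if "k < d" for k using frame_inj[OF fU 1 that] .
  have 2: "(\<Sum>k<d. BW i k * c (d+k)) = 0" if "i < 2*d" for i using e[OF that] 1[of i] by simp
  have cW: "c (d+k) = 0" if "k < d" for k using frame_inj[OF fW, of "\<lambda>k. c (d+k)", OF 2 that] .
  show "c k = 0" if "k < 2*d" for k
  proof (cases "k < d")
    case True then show ?thesis by (rule cU)
  next
    case False
    then have "k = d + (k - d)" "k - d < d" using that by auto
    then show ?thesis using cW by metis
  qed
qed

lemma decomp_nz:
  assumes fV: "frame (2*d) d AV" and f2: "frame (2*d) d A2"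
  and M1: "M1 \<in> carrier_mat d d"
  and dec: "\<And>i j. i < 2*d \<Longrightarrow> j < d \<Longrightarrow> AV i j = (\<Sum>k<d. A1 i k * M1 $$ (k,j)) + (\<Sum>k<d. A2 i k * M2 $$ (k,j))"
  and z1: "\<And>i j. 2*d \<le> i \<Longrightarrow> A1 i j = 0"
  and int: "colspan d AV \<inter> colspan d A2 = {\<lambda>_. 0}"
  shows "det M1 \<noteq> 0"
proof (rule det_nz_crit[OF M1])
  fix c assume h: "\<And>i. i < d \<Longrightarrow> (\<Sum>k<d. M1 $$ (i,k) * c k) = 0"
  define w where "w = (\<lambda>i. \<Sum>j<d. AV i j * c j)"
  have wV: "w \<in> colspan d AV" unfolding w_def by (rule colspan_mem)
  have "w = (\<lambda>i. \<Sum>k<d. A2 i k * (\<Sum>j<d. M2 $$ (k,j) * c j))"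
  proof
    fix i show "w i = (\<Sum>k<d. A2 i k * (\<Sum>j<d. M2 $$ (k,j) * c j))"
    proof (cases "i < 2*d")
      case True
      have "w i = (\<Sum>j<d. ((\<Sum>k<d. A1 i k * M1 $$ (k,j)) + (\<Sum>k<d. A2 i k * M2 $$ (k,j))) * c j)"
        unfolding w_def by (rule sum.cong) (auto simp: dec True)
      also have "\<dots> = (\<Sum>j<d. (\<Sum>k<d. A1 i k * M1 $$ (k,j)) * c j) + (\<Sum>j<d. (\<Sum>k<d. A2 i k * M2 $$ (k,j)) * c j)"
        by (simp add: distrib_right sum.distrib)
      also have "\<dots> = (\<Sum>k<d. A1 i k * (\<Sum>j<d. M1 $$ (k,j) * c j)) + (\<Sum>k<d. A2 i k * (\<Sum>j<d. M2 $$ (k,j) * c j))"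
        by (simp only: swap_sum)
      also have "(\<Sum>k<d. A1 i k * (\<Sum>j<d. M1 $$ (k,j) * c j)) = 0" by (simp add: h)
      finally show ?thesis by simp
    next
      case False
      then show ?thesis by (simp add: w_def frame_zero[OF fV] frame_zero[OF f2])
    qed
  qed
  then have w2: "w \<in> colspan d A2" by (simp only: colspan_mem)
  have "w = (\<lambda>_. 0)" using wV w2 int by blast
  then have 1: "(\<Sum>j<d. AV i j * c j) = 0" for i using fun_cong[of w "\<lambda>_. 0" i] unfolding w_def by simp
  show "c k = 0" if "k < d" for k using frame_inj[OF fV 1 that] .
qed

lemma minor_mult:
  assumes T: "T \<in> carrier_mat d d" and rel: "\<And>i j. j < d \<Longrightarrow> B i j = (\<Sum>k<d. A i k * T $$ (k,j))"
  shows "minor d B I = minor d A I * det T"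
proof -
  have "submat d B I = submat d A I * T"
    by (rule eq_matI) (use T in \<open>auto simp: submat_def rel scalar_prod_def atLeast0LessThan intro!: sum.cong\<close>)
  then show ?thesis using det_mult[OF submat_carrier T] by (simp add: minor_det)
qed

lemma normalize:
  assumes fU: "frame (2*d) d AU" and fV: "frame (2*d) d AV" and fW: "frame (2*d) d AW"
  and iUV: "colspan d AU \<inter> colspan d AV = {\<lambda>_. 0}"
  and iUW: "colspan d AU \<inter> colspan d AW = {\<lambda>_. 0}"
  and iVW: "colspan d AV \<inter> colspan d AW = {\<lambda>_. 0}"
  shows "\<exists>BU BW. frame (2*d) d BU \<and> frame (2*d) d BW \<and> colspan d BU = colspan d AU
     \<and> colspan d BW = colspan d AW \<and> colspan d (\<lambda>i j. BU i j + BW i j) = colspan d AV"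
proof -
  define G0 where "G0 = Gm d AU AW"
  have dG0: "det G0 \<noteq> 0" unfolding G0_def by (rule G_det[OF fU fW iUW])
  define KV where "KV = minv G0 * toM (2*d) d AV"
  have G0c: "G0 \<in> carrier_mat (2*d) (2*d)" by (simp add: G0_def)
  note mi = minv[OF G0c dG0]
  have KVc: "KV \<in> carrier_mat (2*d) d" using mi(1) by (simp add: KV_def)
  have GK: "G0 * KV = toM (2*d) d AV"
    unfolding KV_def assoc_mult_mat[OF G0c mi(1) toM_carrier, symmetric] mi(2) by simp
  define XV where "XV = topM d KV"
  define YV where "YV = botM d KV"
  have dec: "AV i j = (\<Sum>k<d. AU i k * XV $$ (k,j)) + (\<Sum>k<d. AW i k * YV $$ (k,j))"
    if ij: "i < 2*d" "j < d" for i j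
  proof -
    have "AV i j = (G0 * KV) $$ (i,j)" unfolding GK using ij by simp
    also have "\<dots> = (\<Sum>k<d. AU i k * KV $$ (k,j)) + (\<Sum>k<d. AW i k * KV $$ (d+k,j))"
      unfolding G0_def by (rule Gm_block[OF KVc ij])
    also have "\<dots> = (\<Sum>k<d. AU i k * XV $$ (k,j)) + (\<Sum>k<d. AW i k * YV $$ (k,j))"
      using ij by (auto simp: XV_def YV_def topM_def botM_def intro!: sum.cong arg_cong2[where f="(+)"])
    finally show ?thesis .
  qed
  have dX: "det XV \<noteq> 0"
    by (rule decomp_nz[OF fV fW _ dec frame_zero[OF fU] iVW]) (auto simp: XV_def)
  have dY: "det YV \<noteq> 0"
  proof (rule decomp_nz[OF fV fU _ _ frame_zero[OF fW]])
    show "colspan d AV \<inter> colspan d AU = {\<lambda>_. 0}" using iUV by blast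
    show "\<And>i j. i < 2*d \<Longrightarrow> j < d \<Longrightarrow> AV i j = (\<Sum>k<d. AW i k * YV $$ (k,j)) + (\<Sum>k<d. AU i k * XV $$ (k,j))"
      using dec by (simp add: add.commute)
  qed (auto simp: YV_def)
  define BU where "BU = (\<lambda>i j. if j < d then \<Sum>k<d. AU i k * XV $$ (k,j) else 0)"
  define BW where "BW = (\<lambda>i j. if j < d then \<Sum>k<d. AW i k * YV $$ (k,j) else 0)"
  have XVc: "XV \<in> carrier_mat d d" and YVc: "YV \<in> carrier_mat d d" by (auto simp: XV_def YV_def)
  have relU: "\<And>i j. j < d \<Longrightarrow> BU i j = (\<Sum>k<d. AU i k * XV $$ (k,j))" by (simp add: BU_def)
  have relW: "\<And>i j. j < d \<Longrightarrow> BW i j = (\<Sum>k<d. AW i k * YV $$ (k,j))" by (simp add: BW_def)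
  have zBU: "BU i j = 0" if "2*d \<le> i \<or> d \<le> j" for i j
    using that frame_zero[OF fU] by (auto simp: BU_def)
  have zBW: "BW i j = 0" if "2*d \<le> i \<or> d \<le> j" for i j
    using that frame_zero[OF fW] by (auto simp: BW_def)
  have frU: "frame (2*d) d BU"
  proof -
    obtain I where I: "I \<in> dsubsets (2*d) d" "minor d AU I \<noteq> 0" using fU unfolding frame_def by blast
    have "minor d BU I \<noteq> 0" using minor_mult[OF XVc relU] I(2) dX by simp
    then show ?thesis unfolding frame_def using I(1) zBU by blast
  qed
  have frW: "frame (2*d) d BW"
  proof -
    obtain I where I: "I \<in> dsubsets (2*d) d" "minor d AW I \<noteq> 0" using fW unfolding frame_def by blast
    have "minor d BW I \<noteq> 0" using minor_mult[OF YVc relW] I(2) dY by simp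
    then show ?thesis unfolding frame_def using I(1) zBW by blast
  qed
  have cU: "colspan d BU = colspan d AU"
    by (rule colspan_eq_T[OF rel_to_mat[OF relU XVc] XVc dX]) (use zBU frame_zero[OF fU] in auto)
  have cW: "colspan d BW = colspan d AW"
    by (rule colspan_eq_T[OF rel_to_mat[OF relW YVc] YVc dY]) (use zBW frame_zero[OF fW] in auto)
  have cV: "colspan d (\<lambda>i j. BU i j + BW i j) = colspan d AV"
  proof (rule colspan_cong)
    fix i j assume j: "j < d"
    show "BU i j + BW i j = AV i j"
    proof (cases "i < 2*d")
      case True then show ?thesis using dec[OF True j] relU[OF j] relW[OF j] by simp
    next
      case False then show ?thesis using zBU zBW frame_zero[OF fV] by simp
    qed
  qed
  show ?thesis using frU frW cU cW cV by blast
qed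

lemma choice2': "\<forall>i j. \<exists>h. Q i j h \<Longrightarrow> \<exists>H. \<forall>i j. Q i j (H i j)"
  by metis

lemma uniqueness:
  assumes d1: "d \<ge> 1" and fU: "frame (2*d) d BU" and fW: "frame (2*d) d BW"
  and Gi: "Gi \<in> carrier_mat (2*d) (2*d)" and GGi: "Gm d BU BW * Gi = 1\<^sub>m (2*d)"
  and GiG: "Gi * Gm d BU BW = 1\<^sub>m (2*d)"
  and mor: "grass_morphism (2*d) d d f"
  and f10: "f (1,0) = colspan d BU" and f11: "f (1,1) = colspan d (\<lambda>i j. BU i j + BW i j)"
  and f01: "f (0,1) = colspan d BW"
  and st: "(s,t) \<noteq> (0,0)"
  shows "f (s,t) = colspan d (\<lambda>i j. s * BU i j + t * BW i j)"
proof -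
  let ?n = "2*d"
  let ?G = "Gm d BU BW"
  obtain P where P: "\<And>s t. (s,t) \<noteq> (0,0) \<Longrightarrow> (\<exists>A. frame ?n d A \<and> f (s,t) = colspan d A \<and>
      (\<exists>c. c \<noteq> 0 \<and> (\<forall>I\<in>dsubsets ?n d. minor d A I = c * hform d (P I) s t)))"
    using mor unfolding grass_morphism_def by blast
  have "\<forall>s t. \<exists>A c. (s,t) \<noteq> (0,0) \<longrightarrow> frame ?n d A \<and> f (s,t) = colspan d A \<and> c \<noteq> 0 \<and>
      (\<forall>I\<in>dsubsets ?n d. minor d A I = c * hform d (P I) s t)"
    using P by blast
  then obtain Af cf where H: "\<And>s t. (s,t) \<noteq> (0,0) \<Longrightarrow> frame ?n d (Af s t) \<and> f (s,t) = colspan d (Af s t)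
      \<and> cf s t \<noteq> 0 \<and> (\<forall>I\<in>dsubsets ?n d. minor d (Af s t) I = cf s t * hform d (P I) s t)"
    by metis
  have mP: "\<And>s t I. (s,t) \<noteq> (0,0) \<Longrightarrow> I \<in> dsubsets ?n d \<Longrightarrow> minor d (Af s t) I = cf s t * hform d (P I) s t"
    using H by blast
  define K where "K s t = Gi * toM ?n d (Af s t)" for s t
  have Kc: "K s t \<in> carrier_mat ?n d" for s t using Gi by (simp add: K_def)
  have GK: "?G * K s t = toM ?n d (Af s t)" for s t
    unfolding K_def assoc_mult_mat[OF Gm_car Gi toM_carrier, symmetric] GGi by simp
  define B where "B s t = (\<lambda>i j. s * BU i j + t * BW i j)" for s t
  have zB: "B s t i j = 0" if "?n \<le> i" for s t i j
    using that frame_zero[OF fU] frame_zero[OF fW] by (simp add: B_def)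
  have GS: "toM ?n d (B s t) = ?G * Sm d s t" for s t
    unfolding B_def by (rule G_S) (use frame_zero[OF fU] in auto)
  have spec: "\<exists>T \<in> carrier_mat d d. det T \<noteq> 0 \<and> K s t = Sm d s t * T"
    if st: "(s,t) \<noteq> (0,0)" and sub: "colspan d (Af s t) \<subseteq> colspan d (B s t)" for s t
  proof -
    obtain T where T: "T \<in> carrier_mat d d" "\<forall>i j. j < d \<longrightarrow> Af s t i j = (\<Sum>k<d. B s t i k * T $$ (k,j))"
      using colspan_sub_T[OF sub] by blast
    have rel: "toM ?n d (Af s t) = toM ?n d (B s t) * T" by (rule rel_to_mat) (use T in auto)
    have "det T \<noteq> 0" by (rule rel_det_nz[OF rel T(1)]) (use H[OF st] in auto)
    moreover have "K s t = Sm d s t * T"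
    proof -
      have "K s t = Gi * (?G * (Sm d s t * T))"
        unfolding K_def rel GS assoc_mult_mat[OF Gm_car Sm_car T(1)] ..
      also have "\<dots> = Sm d s t * T"
        unfolding assoc_mult_mat[OF Gi Gm_car mult_carrier_mat[OF Sm_car T(1)], symmetric] GiG
        using T(1) by simp
      finally show ?thesis .
    qed
    ultimately show ?thesis using T(1) by blast
  qed
  have B10: "B 1 0 = BU" and B01: "B 0 1 = BW" and B11: "B 1 1 = (\<lambda>i j. BU i j + BW i j)"
    by (auto simp: B_def)
  obtain T10 where T10: "T10 \<in> carrier_mat d d" "det T10 \<noteq> 0" "K 1 0 = Sm d 1 0 * T10"
    using spec[of 1 0] H[of 1 0] f10 B10 by auto
  obtain T01 where T01: "T01 \<in> carrier_mat d d" "det T01 \<noteq> 0" "K 0 1 = Sm d 0 1 * T01"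
    using spec[of 0 1] H[of 0 1] f01 B01 by auto
  obtain T11 where T11: "T11 \<in> carrier_mat d d" "det T11 \<noteq> 0" "K 1 1 = Sm d 1 1 * T11"
    using spec[of 1 1] H[of 1 1] f11 B11 by auto
  define Xf where "Xf s t = topM d (K s t)" for s t
  define Yf where "Yf s t = botM d (K s t)" for s t
  have p10: "Yf 1 0 = 0\<^sub>m d d" "det (Xf 1 0) \<noteq> 0"
    unfolding Xf_def Yf_def T10(3) top_SmT[OF T10(1)] bot_SmT[OF T10(1)] using T10
    by (auto intro!: eq_matI)
  have p01: "Xf 0 1 = 0\<^sub>m d d" "det (Yf 0 1) \<noteq> 0"
    unfolding Xf_def Yf_def T01(3) top_SmT[OF T01(1)] bot_SmT[OF T01(1)] using T01
    by (auto intro!: eq_matI)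
  have p11: "Xf 1 1 = Yf 1 1" "det (Xf 1 1) \<noteq> 0"
    unfolding Xf_def Yf_def T11(3) top_SmT[OF T11(1)] bot_SmT[OF T11(1)] using T11 by auto
  obtain he where he: "\<forall>s t. (s,t) \<noteq> (0,0) \<longrightarrow> det (Lsel d ?n (\<lambda>i. i) * (Gi * toM ?n d (Af s t))) = cf s t * hform d he s t"
    using morph_fun[OF Lsel_carrier Gi mP] by blast
  obtain hd where hd: "\<forall>s t. (s,t) \<noteq> (0,0) \<longrightarrow> det (Lsel d ?n (\<lambda>i. d + i) * (Gi * toM ?n d (Af s t))) = cf s t * hform d hd s t"
    using morph_fun[OF Lsel_carrier Gi mP] by blast
  have "\<forall>i j. \<exists>h. \<forall>s t. (s,t) \<noteq> (0,0) \<longrightarrow> det (Lsel d ?n (\<lambda>r. if r = j then d + i else r) * (Gi * toM ?n d (Af s t))) = cf s t * hform d h s t"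
    using morph_fun[OF Lsel_carrier Gi mP] by blast
  from choice2'[OF this] obtain hq where hq: "\<forall>i j. \<forall>s t. (s,t) \<noteq> (0,0) \<longrightarrow> det (Lsel d ?n (\<lambda>r. if r = j then d + i else r) * (Gi * toM ?n d (Af s t))) = cf s t * hform d (hq i j) s t"
    by (elim exE)
  have "\<forall>i j. \<exists>h. \<forall>s t. (s,t) \<noteq> (0,0) \<longrightarrow> det (Lsel d ?n (\<lambda>r. if r = j then i else d + r) * (Gi * toM ?n d (Af s t))) = cf s t * hform d h s t"
    using morph_fun[OF Lsel_carrier Gi mP] by blast
  from choice2'[OF this] obtain hr where hr: "\<forall>i j. \<forall>s t. (s,t) \<noteq> (0,0) \<longrightarrow> det (Lsel d ?n (\<lambda>r. if r = j then i else d + r) * (Gi * toM ?n d (Af s t))) = cf s t * hform d (hr i j) s t"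
    by (elim exE)
  have core: "\<exists>T\<in>carrier_mat d d. det T \<noteq> 0 \<and> Xf s t = s \<cdot>\<^sub>m T \<and> Yf s t = t \<cdot>\<^sub>m T"
  proof (rule core_result[of d Xf Yf cf he hd hq hr s t])
    show "1 \<le> d" by (rule d1)
    show "\<And>s t. Xf s t \<in> carrier_mat d d" "\<And>s t. Yf s t \<in> carrier_mat d d" by (auto simp: Xf_def Yf_def)
    show "\<And>s t. (s, t) \<noteq> (0, 0) \<Longrightarrow> cf s t \<noteq> 0" using H by blast
    show "\<And>s t. (s, t) \<noteq> (0, 0) \<Longrightarrow> det (Xf s t) = cf s t * hform d he s t"
      using he by (simp add: Xf_def K_def top_sel[OF Kc[unfolded K_def]])
    show "\<And>s t. (s, t) \<noteq> (0, 0) \<Longrightarrow> det (Yf s t) = cf s t * hform d hd s t"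
      using hd by (simp add: Yf_def K_def bot_sel[OF Kc[unfolded K_def]])
    show "\<And>s t i j. (s, t) \<noteq> (0, 0) \<Longrightarrow> i < d \<Longrightarrow> j < d \<Longrightarrow>
        (Yf s t * adj_mat (Xf s t)) $$ (i, j) = cf s t * hform d (hq i j) s t"
    proof -
      fix s t :: complex and i j :: nat assume st: "(s, t) \<noteq> (0, 0)" and ij: "i < d" "j < d"
      have "(Yf s t * adj_mat (Xf s t)) $$ (i, j) = det (Lsel d ?n (\<lambda>r. if r = j then d + i else r) * K s t)"
        using q_sel[OF Kc ij] by (simp add: Xf_def Yf_def)
      also have "\<dots> = cf s t * hform d (hq i j) s t" unfolding K_def using hq st by blast
      finally show "(Yf s t * adj_mat (Xf s t)) $$ (i, j) = cf s t * hform d (hq i j) s t" .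
    qed
    show "\<And>s t i j. (s, t) \<noteq> (0, 0) \<Longrightarrow> i < d \<Longrightarrow> j < d \<Longrightarrow>
        (Xf s t * adj_mat (Yf s t)) $$ (i, j) = cf s t * hform d (hr i j) s t"
    proof -
      fix s t :: complex and i j :: nat assume st: "(s, t) \<noteq> (0, 0)" and ij: "i < d" "j < d"
      have "(Xf s t * adj_mat (Yf s t)) $$ (i, j) = det (Lsel d ?n (\<lambda>r. if r = j then i else d + r) * K s t)"
        using r_sel[OF Kc ij] by (simp add: Xf_def Yf_def)
      also have "\<dots> = cf s t * hform d (hr i j) s t" unfolding K_def using hr st by blast
      finally show "(Xf s t * adj_mat (Yf s t)) $$ (i, j) = cf s t * hform d (hr i j) s t" .
    qed
  qed (use p10 p01 p11 st in auto)
  then obtain T where T: "T \<in> carrier_mat d d" "det T \<noteq> 0" "Xf s t = s \<cdot>\<^sub>m T" "Yf s t = t \<cdot>\<^sub>m T" by blast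
  have KT: "K s t = Sm d s t * T"
    by (rule SmT_eq[OF Kc T(1)]) (use T(3,4) in \<open>simp_all add: Xf_def Yf_def\<close>)
  have "toM ?n d (Af s t) = ?G * (Sm d s t * T)" unfolding GK[symmetric] KT ..
  also have "\<dots> = toM ?n d (B s t) * T" unfolding GS by (rule assoc_mult_mat[symmetric, OF Gm_car Sm_car T(1)])
  finally have rel: "toM ?n d (Af s t) = toM ?n d (B s t) * T" .
  have "colspan d (Af s t) = colspan d (B s t)"
    by (rule colspan_eq_T[OF rel T(1,2)]) (use H[OF st] frame_zero zB in auto)
  then show ?thesis using H[OF st] by (simp add: B_def)
qed


lemma existence:
  assumes d1: "d \<ge> 1" and fU: "frame (2*d) d BU" and fW: "frame (2*d) d BW"
  and Gi: "Gi \<in> carrier_mat (2*d) (2*d)" and GiG: "Gi * Gm d BU BW = 1\<^sub>m (2*d)"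
  shows "grass_morphism (2*d) d d (\<lambda>(s,t). colspan d (\<lambda>i j. s * BU i j + t * BW i j))"
proof -
  let ?n = "2*d"
  have "\<forall>I. \<exists>c. \<forall>s t. minor d (\<lambda>i j. s * BU i j + t * BW i j) I = hform d c s t"
    using minor_affine_ishf unfolding ishf_def by blast
  then obtain P where P: "\<forall>I. \<forall>s t. minor d (\<lambda>i j. s * BU i j + t * BW i j) I = hform d (P I) s t"
    by (metis choice)
  show ?thesis unfolding grass_morphism_def
  proof (intro exI[of _ P] allI impI)
    fix s t :: complex assume st: "(s,t) \<noteq> (0,0)"
    let ?B = "\<lambda>i j. s * BU i j + t * BW i j"
    have nzm: "\<exists>I\<in>dsubsets ?n d. minor d ?B I \<noteq> 0"
    proof (rule ccontr)
      assume "\<not> (\<exists>I\<in>dsubsets ?n d. minor d ?B I \<noteq> 0)"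
      then have z: "\<And>I. I \<in> dsubsets ?n d \<Longrightarrow> minor d ?B I = 0" by blast
      define \<sigma> where "\<sigma> = (if s \<noteq> 0 then (\<lambda>i::nat. i) else (\<lambda>i. d + i))"
      define L where "L = Lsel d ?n \<sigma>"
      have Lc: "L \<in> carrier_mat d ?n" by (simp add: L_def)
      obtain lam where lam: "\<And>A. det ((L * Gi) * toM ?n d A) = (\<Sum>I\<in>dsubsets ?n d. lam I * minor d A I)"
        using cauchy_binet_ex[OF mult_carrier_mat[OF Lc Gi]] by auto
      have "det ((L * Gi) * toM ?n d ?B) = 0" unfolding lam by (simp add: z)
      moreover have "(L * Gi) * toM ?n d ?B = L * Sm d s t"
      proof -
        have "toM ?n d ?B = Gm d BU BW * Sm d s t" by (rule G_S) (use frame_zero[OF fU] in auto)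
        then have "(L * Gi) * toM ?n d ?B = L * (Gi * (Gm d BU BW * Sm d s t))"
          using assoc_mult_mat[OF Lc Gi mult_carrier_mat[OF Gm_car Sm_car]] by simp
        also have "Gi * (Gm d BU BW * Sm d s t) = (Gi * Gm d BU BW) * Sm d s t"
          by (rule assoc_mult_mat[symmetric, OF Gi Gm_car Sm_car])
        finally show ?thesis unfolding GiG by simp
      qed
      moreover have "L * Sm d s t = (if s \<noteq> 0 then s else t) \<cdot>\<^sub>m 1\<^sub>m d"
      proof (cases "s \<noteq> 0")
        case True
        have "L * Sm d s t = topM d (Sm d s t * 1\<^sub>m d)" using True
          by (simp add: L_def \<sigma>_def top_sel)
        then show ?thesis using True top_SmT[OF one_carrier_mat] by simp
      next
        case False
        have "L * Sm d s t = botM d (Sm d s t * 1\<^sub>m d)" using False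
          by (simp add: L_def \<sigma>_def bot_sel)
        then show ?thesis using False bot_SmT[OF one_carrier_mat] by simp
      qed
      moreover have "det ((if s \<noteq> 0 then s else t) \<cdot>\<^sub>m 1\<^sub>m d) \<noteq> 0"
        using st by auto
      ultimately show False by simp
    qed
    have fr: "frame ?n d ?B"
      unfolding frame_def using nzm frame_zero[OF fU] frame_zero[OF fW] by auto
    show "(\<exists>I\<in>dsubsets ?n d. hform d (P I) s t \<noteq> 0) \<and>
       (\<exists>A. frame ?n d A \<and> (case (s, t) of (s, t) \<Rightarrow> colspan d (\<lambda>i j. s * BU i j + t * BW i j)) = colspan d A \<and>
            (\<exists>c. c \<noteq> 0 \<and> (\<forall>I\<in>dsubsets ?n d. minor d A I = c * hform d (P I) s t)))"
    proof (intro conjI exI[of _ ?B] exI[of _ 1])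
      show "\<exists>I\<in>dsubsets ?n d. hform d (P I) s t \<noteq> 0" using nzm P by metis
    qed (use fr P in auto)
  qed
qed

theorem mainTheorem1:
  fixes d :: nat and U V W :: "cvec set"
  assumes "d \<ge> 1"
    and "grass_point (2 * d) d U" and "grass_point (2 * d) d V" and "grass_point (2 * d) d W"
    and "U \<inter> V = {\<lambda>_. 0}" and "U \<inter> W = {\<lambda>_. 0}" and "V \<inter> W = {\<lambda>_. 0}"
  shows "(\<exists>f. grass_morphism (2 * d) d d f \<and> f (1, 0) = U \<and> f (1, 1) = V \<and> f (0, 1) = W)
       \<and> (\<forall>f g. grass_morphism (2 * d) d d f \<and> f (1, 0) = U \<and> f (1, 1) = V \<and> f (0, 1) = W
              \<and> grass_morphism (2 * d) d d g \<and> g (1, 0) = U \<and> g (1, 1) = V \<and> g (0, 1) = W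
              \<longrightarrow> (\<forall>s t. (s, t) \<noteq> (0, 0) \<longrightarrow> f (s, t) = g (s, t)))"
proof -
  obtain AU where AU: "frame (2*d) d AU" "U = colspan d AU" using assms(2) unfolding grass_point_def by blast
  obtain AV where AV: "frame (2*d) d AV" "V = colspan d AV" using assms(3) unfolding grass_point_def by blast
  obtain AW where AW: "frame (2*d) d AW" "W = colspan d AW" using assms(4) unfolding grass_point_def by blast
  obtain BU BW where B: "frame (2*d) d BU" "frame (2*d) d BW" "colspan d BU = U" "colspan d BW = W"
      "colspan d (\<lambda>i j. BU i j + BW i j) = V"
    using normalize[OF AU(1) AV(1) AW(1)] assms(5-7) AU(2) AV(2) AW(2) by metis
  have dG: "det (Gm d BU BW) \<noteq> 0" by (rule G_det[OF B(1,2)]) (use B(3,4) assms(6) in simp)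
  note mi = minv[OF Gm_car dG]
  define f0 where "f0 = (\<lambda>(s,t). colspan d (\<lambda>i j. s * BU i j + t * BW i j))"
  have m0: "grass_morphism (2*d) d d f0" unfolding f0_def by (rule existence[OF assms(1) B(1,2) mi(1) mi(3)])
  have "f0 (1,0) = U" "f0 (1,1) = V" "f0 (0,1) = W" using B(3-5) by (simp_all add: f0_def)
  then have ex: "\<exists>f. grass_morphism (2 * d) d d f \<and> f (1, 0) = U \<and> f (1, 1) = V \<and> f (0, 1) = W"
    using m0 by blast
  have un: "f (s,t) = colspan d (\<lambda>i j. s * BU i j + t * BW i j)"
    if "grass_morphism (2 * d) d d f" "f (1, 0) = U" "f (1, 1) = V" "f (0, 1) = W" "(s,t) \<noteq> (0,0)" for f s t
    by (rule uniqueness[OF assms(1) B(1,2) mi(1) mi(2) mi(3) that(1)]) (use that B in auto)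
  show ?thesis
  proof (rule conjI[OF ex], intro allI impI)
    fix f g :: "complex \<times> complex \<Rightarrow> cvec set" and s t :: complex
    assume H: "grass_morphism (2 * d) d d f \<and> f (1, 0) = U \<and> f (1, 1) = V \<and> f (0, 1) = W
              \<and> grass_morphism (2 * d) d d g \<and> g (1, 0) = U \<and> g (1, 1) = V \<and> g (0, 1) = W"
      and st: "(s, t) \<noteq> (0, 0)"
    have "f (s,t) = colspan d (\<lambda>i j. s * BU i j + t * BW i j)" by (rule un) (use H st in auto)
    moreover have "g (s,t) = colspan d (\<lambda>i j. s * BU i j + t * BW i j)" by (rule un) (use H st in auto)
    ultimately show "f (s, t) = g (s, t)" by simp
  qed
qed

end
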